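(* Let $\mathfrak{S}=(\mathcal{X},\mathsf{S},\gamma,(\Lambda_{a})_{a\in\mathcal{A}})$ be a spectral decomposition system for the Euclidean space $\mathfrak{H}$. Let $D$ be a nonempty $\mathsf{S}$-invariant subset of $\mathcal{X}$, let $\psi\in\Gamma_0(\mathcal{X})$ be an $\mathsf{S}$-invariant Legendre function such that $D\cap\operatorname{dom}\psi\neq\varnothing$, and let $X\in\mathfrak{H}$. Then: (i) $\operatorname{dist}_{\gamma^{-1}(D)}^{\psi\circ\gamma}(X)=\operatorname{dist}_D^{\psi}(\gamma(X))$; (ii) for every $Z\in\mathfrak{H}$: $Z\in\operatorname{Proj}_{\gamma^{-1}(D)}^{\psi\circ\gamma}X$ if and only if $\gamma(Z)\in\operatorname{Proj}_{D}^{\psi}\gamma(X)$ and there exists $a\in\mathcal{A}$ with $X=\Lambda_a\gamma(X)$ and $Z=\Lambda_a\gamma(Z)$; (iii) $\operatorname{Proj}_{\gamma^{-1}(D)}^{\psi\circ\gamma}X=\{\Lambda_az: z\in\operatorname{Proj}_D^{\psi}\gamma(X),\ a\in\mathcal{A}_X\}$; (iv) $\operatorname{Proj}_{\gamma^{-1}(D)}^{\psi\circ\gamma}X$ is a singleton if and only if $\operatorname{Proj}_D^{\psi}\gamma(X)$ is a singleton.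
   Context: A Euclidean space is a finite-dimensional real inner product space; inner products are written $\langle\cdot,\cdot\rangle$ and norms $\|\cdot\|$. Let $\mathfrak{H}$ and $\mathcal{X}$ be Euclidean spaces, let $\mathsf{S}$ be a group acting on $\mathcal{X}$ by linear isometries, let $\gamma\colon\mathfrak{H}\to\mathcal{X}$, and let $(\Lambda_a)_{a\in\mathcal{A}}$ be a family of linear operators from $\mathcal{X}$ to $\mathfrak{H}$. The orbit of $x$ is $\mathsf{S}\cdot x=\{s\cdot x: s\in\mathsf{S}\}$; a map $f$ on $\mathcal{X}$ is $\mathsf{S}$-invariant if $f(s\cdot x)=f(x)$ for all $s,x$; a set $D$ is $\mathsf{S}$-invariant if $s\cdot x\in D$ for all $x\in D$, $s\in\mathsf{S}$. The tuple is a spectral decomposition system for $\mathfrak{H}$ if: [A] every $\Lambda_a$ is an isometry; [B] there exists an $\mathsf{S}$-invariant $\tau\colon\mathcal{X}\to\mathcal{X}$ with $\tau(x)\in\mathsf{S}\cdot x$ for all $x$ and $\gamma\circ\Lambda_a=\tau$ for all $a$; [C] for every $X\in\mathfrak{H}$ there is $a$ with $X=\Lambda_a\gamma(X)$; [D] $\langle X,Y\rangle\leq\langle\gamma(X),\gamma(Y)\rangle$ for all $X,Y\in\mathfrak{H}$. For $X\in\mathfrak{H}$, $\mathcal{A}_X=\{a\in\mathcal{A}: X=\Lambda_a\gamma(X)\}$. $\operatorname{dom}f=\{f<+\infty\}$; $\Gamma_0(\mathcal{H})$ is the set of proper lower semicontinuous convex functions $\mathcal{H}\to\left]-\infty,+\infty\right]$;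 $\partial g(x)=\{u:\langle z-x,u\rangle+g(x)\leq g(z)\ \forall z\}$. A function $g\in\Gamma_0(\mathcal{H})$ is Legendre if $\partial g(x)$ has at most one element for every $x$ and $g$ is strictly convex on every convex subset of $\{x:\partial g(x)\neq\varnothing\}$. ($\psi\circ\gamma$ is a Legendre function on $\mathfrak{H}$ under the stated hypotheses.) For Legendre $g$: $D_g(y,x)=g(y)-g(x)-\langle y-x,\nabla g(x)\rangle$ if $x\in\operatorname{int}\operatorname{dom}g$ and $+\infty$ otherwise; for $f$ with $\operatorname{dom}f\cap\operatorname{dom}g\neq\varnothing$, $\operatorname{env}_f^g(x)=\inf_y(f(y)+D_g(y,x))$ and $\operatorname{Prox}_f^gx=\operatorname{Argmin}(f+D_g(\cdot,x))$ (set of minimizers if the infimum is $<+\infty$, else $\varnothing$). For a set $C$ with $C\cap\operatorname{dom}g\neq\varnothing$, with $\iota_C$ the indicator function ($0$ on $C$, $+\infty$ off $C$): $\operatorname{dist}_C^g=\operatorname{env}_{\iota_C}^g$ and $\operatorname{Proj}_C^g=\operatorname{Prox}_{\iota_C}^g$. *)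

theory Defs
  imports "HOL-Analysis.Analysis"
begin

text \<open>A group acting on X by linear isometries is represented by the group of
maps x |-> s.x it induces (only the action matters for orbits/invariance).\<close>

definition lin_isometry :: "('u::real_normed_vector \<Rightarrow> 'v::real_normed_vector) \<Rightarrow> bool" where
  "lin_isometry L \<longleftrightarrow> linear L \<and> (\<forall>x. norm (L x) = norm x)"

definition isometry_group :: "('x::euclidean_space \<Rightarrow> 'x) set \<Rightarrow> bool" where
  "isometry_group S \<longleftrightarrow>
     (\<forall>s\<in>S. lin_isometry s) \<and> id \<in> S \<and> (\<forall>s\<in>S. \<forall>t\<in>S. s \<circ> t \<in> S) \<and>
     (\<forall>s\<in>S. \<exists>t\<in>S. s \<circ> t = id \<and> t \<circ> s = id)"

definition orbit :: "('x \<Rightarrow> 'x) set \<Rightarrow> 'x \<Rightarrow> 'x set" where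
  "orbit S x = {s x | s. s \<in> S}"

definition invariant_fun :: "('x \<Rightarrow> 'x) set \<Rightarrow> ('x \<Rightarrow> 'b) \<Rightarrow> bool" where
  "invariant_fun S f \<longleftrightarrow> (\<forall>s\<in>S. \<forall>x. f (s x) = f x)"

definition invariant_set :: "('x \<Rightarrow> 'x) set \<Rightarrow> 'x set \<Rightarrow> bool" where
  "invariant_set S D \<longleftrightarrow> (\<forall>s\<in>S. \<forall>x\<in>D. s x \<in> D)"

definition spectral_decomposition_system ::
  "('x::euclidean_space \<Rightarrow> 'x) set \<Rightarrow> ('h::euclidean_space \<Rightarrow> 'x) \<Rightarrow> 'a set \<Rightarrow> ('a \<Rightarrow> 'x \<Rightarrow> 'h) \<Rightarrow> bool" where
  "spectral_decomposition_system S \<gamma> A \<Lambda> \<longleftrightarrow>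
     isometry_group S \<and>
     (\<forall>a\<in>A. lin_isometry (\<Lambda> a)) \<and>
     (\<exists>\<tau>. invariant_fun S \<tau> \<and> (\<forall>x. \<tau> x \<in> orbit S x) \<and> (\<forall>a\<in>A. \<gamma> \<circ> \<Lambda> a = \<tau>)) \<and>
     (\<forall>X. \<exists>a\<in>A. X = \<Lambda> a (\<gamma> X)) \<and>
     (\<forall>X Y. inner X Y \<le> inner (\<gamma> X) (\<gamma> Y))"

definition adapted_indices :: "('h \<Rightarrow> 'x) \<Rightarrow> 'a set \<Rightarrow> ('a \<Rightarrow> 'x \<Rightarrow> 'h) \<Rightarrow> 'h \<Rightarrow> 'a set" where
  "adapted_indices \<gamma> A \<Lambda> X = {a\<in>A. X = \<Lambda> a (\<gamma> X)}"

definition edom :: "('u \<Rightarrow> ereal) \<Rightarrow> 'u set" where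
  "edom f = {x. f x < \<infinity>}"

definition epigraph :: "('u \<Rightarrow> ereal) \<Rightarrow> ('u \<times> real) set" where
  "epigraph f = {(x, r). f x \<le> ereal r}"

definition Gamma0 :: "('u::euclidean_space \<Rightarrow> ereal) \<Rightarrow> bool" where
  "Gamma0 f \<longleftrightarrow> (\<forall>x. f x \<noteq> -\<infinity>) \<and> (\<exists>x. f x < \<infinity>) \<and>
     closed (epigraph f) \<and> convex (epigraph f)"

definition subdiff :: "('u::real_inner \<Rightarrow> ereal) \<Rightarrow> 'u \<Rightarrow> 'u set" where
  "subdiff g x = {u. \<forall>z. ereal (inner (z - x) u) + g x \<le> g z}"

definition strictly_convex_on_e :: "'u::real_vector set \<Rightarrow> ('u \<Rightarrow> ereal) \<Rightarrow> bool" where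
  "strictly_convex_on_e C g \<longleftrightarrow>
     (\<forall>x\<in>C. \<forall>y\<in>C. \<forall>t::real. x \<noteq> y \<and> 0 < t \<and> t < 1 \<longrightarrow>
        g ((1 - t) *\<^sub>R x + t *\<^sub>R y) < ereal (1 - t) * g x + ereal t * g y)"

definition legendre :: "('u::euclidean_space \<Rightarrow> ereal) \<Rightarrow> bool" where
  "legendre g \<longleftrightarrow> Gamma0 g \<and>
     (\<forall>x. \<forall>u\<in>subdiff g x. \<forall>v\<in>subdiff g x. u = v) \<and>
     (\<forall>C. convex C \<and> C \<subseteq> {x. subdiff g x \<noteq> {}} \<longrightarrow> strictly_convex_on_e C g)"

definition egrad :: "('u::euclidean_space \<Rightarrow> ereal) \<Rightarrow> 'u \<Rightarrow> 'u" where
  "egrad g x = (SOME u. ((\<lambda>y. real_of_ereal (g y)) has_derivative (\<lambda>h. inner u h)) (at x))"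

definition bregman :: "('u::euclidean_space \<Rightarrow> ereal) \<Rightarrow> 'u \<Rightarrow> 'u \<Rightarrow> ereal" where
  "bregman g y x =
     (if x \<in> interior (edom g) then g y - g x - ereal (inner (y - x) (egrad g x)) else \<infinity>)"

definition benv :: "('u::euclidean_space \<Rightarrow> ereal) \<Rightarrow> ('u \<Rightarrow> ereal) \<Rightarrow> 'u \<Rightarrow> ereal" where
  "benv f g x = (INF y. f y + bregman g y x)"

definition bprox :: "('u::euclidean_space \<Rightarrow> ereal) \<Rightarrow> ('u \<Rightarrow> ereal) \<Rightarrow> 'u \<Rightarrow> 'u set" where
  "bprox f g x = (if benv f g x < \<infinity> then {y. f y + bregman g y x = benv f g x} else {})"

definition eindicator :: "'u set \<Rightarrow> 'u \<Rightarrow> ereal" where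
  "eindicator C y = (if y \<in> C then 0 else \<infinity>)"

definition bdist :: "'u::euclidean_space set \<Rightarrow> ('u \<Rightarrow> ereal) \<Rightarrow> 'u \<Rightarrow> ereal" where
  "bdist C g = benv (eindicator C) g"

definition bproj :: "'u::euclidean_space set \<Rightarrow> ('u \<Rightarrow> ereal) \<Rightarrow> 'u \<Rightarrow> 'u set" where
  "bproj C g = bprox (eindicator C) g"

end

theory Submission
  imports Defs
begin

lemma sub_real:
  assumes "V \<in> subdiff F Y" "F Y = ereal a" "F W = ereal b"
  shows "a + inner (W - Y) V \<le> b"
proof -
  have "ereal (inner (W - Y) V) + F Y \<le> F W" using assms(1) unfolding subdiff_def by blast
  then show ?thesis using assms(2,3) by simp
qed

lemma diff_lemma:
  fixes F :: "'u::euclidean_space \<Rightarrow> ereal" and V :: "'u \<Rightarrow> 'u"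
  assumes r0: "r0 > 0"
   and fin: "\<And>Y. Y \<in> ball X r0 \<Longrightarrow> F Y = ereal (real_of_ereal (F Y))"
   and nm: "\<And>Y. F Y \<noteq> -\<infinity>"
   and sub: "\<And>Y. Y \<in> ball X r0 \<Longrightarrow> V Y \<in> subdiff F Y"
   and uniq: "\<And>W. W \<in> subdiff F X \<Longrightarrow> W = V X"
   and cont: "\<And>e. e > 0 \<Longrightarrow> \<exists>d>0. \<forall>Y \<in> ball X r0. norm (Y - X) < d \<longrightarrow>
                 \<bar>real_of_ereal (F Y) - real_of_ereal (F X)\<bar> < e"
  shows "((\<lambda>Y. real_of_ereal (F Y)) has_derivative (\<lambda>h. inner (V X) h)) (at X)"
proof -
  define f where "f Y = real_of_ereal (F Y)" for Y
  have X0: "X \<in> ball X r0" using r0 by simp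
  have sr: "f Y + inner (W - Y) (V Y) \<le> f W" if "Y \<in> ball X r0" "W \<in> ball X r0" for Y W
    using sub_real[OF sub[OF that(1)] fin[OF that(1)] fin[OF that(2)]] unfolding f_def .
  obtain d1 where d1: "d1 > 0" "\<forall>Y \<in> ball X r0. norm (Y - X) < d1 \<longrightarrow> \<bar>f Y - f X\<bar> < 1"
    using cont[of 1] unfolding f_def by auto
  define \<delta> where "\<delta> = min d1 r0"
  have \<delta>: "\<delta> > 0" "\<delta> \<le> d1" "\<delta> \<le> r0" using d1 r0 unfolding \<delta>_def by auto
  define M where "M = 8 / \<delta>"
  have bnd: "norm (V Y) \<le> M" if Y: "norm (Y - X) < \<delta>/2" for Y
  proof (cases "V Y = 0")
    case True then show ?thesis using \<delta> by (simp add: M_def)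
  next
    case False
    define e where "e = (1 / norm (V Y)) *\<^sub>R V Y"
    have ne: "norm e = 1" using False by (simp add: e_def)
    define W where "W = Y + (\<delta>/4) *\<^sub>R e"
    have "norm (W - X) \<le> norm (Y - X) + norm ((\<delta>/4) *\<^sub>R e)"
      unfolding W_def by (metis add.commute add_diff_eq norm_triangle_ineq)
    also have "\<dots> < \<delta>/2 + \<delta>/4" using Y ne \<delta> by simp
    finally have WX: "norm (W - X) < \<delta>" using \<delta> by linarith
    have Yb: "Y \<in> ball X r0" using Y \<delta> by (simp add: dist_norm norm_minus_commute)
    have Wb: "W \<in> ball X r0" using WX \<delta> by (simp add: dist_norm norm_minus_commute)
    have "f Y + inner (W - Y) (V Y) \<le> f W" using sr[OF Yb Wb] .
    moreover have "inner (W - Y) (V Y) = (\<delta>/4) * norm (V Y)"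
      using False by (simp add: W_def e_def inner_commute power2_norm_eq_inner[symmetric] power2_eq_square)
    moreover have "\<bar>f Y - f X\<bar> < 1" using d1 Yb Y \<delta> by auto
    moreover have "\<bar>f W - f X\<bar> < 1" using d1 Wb WX \<delta> by auto
    ultimately have "(\<delta>/4) * norm (V Y) < 2" by linarith
    then have "norm (V Y) < 8 / \<delta>" using \<delta> by (simp add: field_simps)
    then show ?thesis by (simp add: M_def)
  qed
  have fcont: "(\<lambda>n. f (Ys n)) \<longlonglongrightarrow> f X" if YL: "Ys \<longlonglongrightarrow> X" and YB: "\<And>n. Ys n \<in> ball X r0" for Ys
  proof (rule LIMSEQ_I)
    fix e :: real assume "e > 0"
    then obtain d where d: "d > 0" "\<forall>Y \<in> ball X r0. norm (Y - X) < d \<longrightarrow> \<bar>f Y - f X\<bar> < e"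
      using cont unfolding f_def by blast
    obtain N where "\<forall>n\<ge>N. norm (Ys n - X) < d" using LIMSEQ_D[OF YL d(1)] by metis
    then show "\<exists>N. \<forall>n\<ge>N. norm (f (Ys n) - f X) < e" using d YB by (metis real_norm_def)
  qed
  have step2: "\<exists>d>0. \<forall>Y. norm (Y - X) < d \<longrightarrow> norm (V Y - V X) \<le> e" if e: "e > 0" for e
  proof (rule ccontr)
    assume "\<not> ?thesis"
    then have H: "\<forall>d>0. \<exists>Y. norm (Y - X) < d \<and> norm (V Y - V X) > e" by (auto simp: not_le)
    define Ys where "Ys n = (SOME Y. norm (Y - X) < min (\<delta>/2) (1 / (real n + 1)) \<and> norm (V Y - V X) > e)" for n
    have Ys: "norm (Ys n - X) < min (\<delta>/2) (1 / (real n + 1)) \<and> norm (V (Ys n) - V X) > e" for n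
    proof -
      have "min (\<delta>/2) (1 / (real n + 1)) > 0" using \<delta> by simp
      then show ?thesis unfolding Ys_def using H by (metis (no_types, lifting) someI_ex)
    qed
    have Ysb: "Ys n \<in> ball X r0" for n using Ys[of n] \<delta> by (simp add: dist_norm norm_minus_commute)
    have Ylim: "Ys \<longlonglongrightarrow> X"
    proof (rule LIMSEQ_I)
      fix r :: real assume "r > 0"
      obtain N :: nat where N: "1 / r < real N" using reals_Archimedean2 by blast
      have "norm (Ys n - X) < r" if "n \<ge> N" for n
      proof -
        have "norm (Ys n - X) < 1 / (real n + 1)" using Ys[of n] by simp
        also have "\<dots> \<le> r" using N that \<open>r > 0\<close>
          by (simp add: field_simps) (smt (verit, best) of_nat_mono mult_left_mono divide_less_eq)
        finally show ?thesis .
      qed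
      then show "\<exists>N. \<forall>n\<ge>N. norm (Ys n - X) < r" by blast
    qed
    have "bounded (range (\<lambda>n. V (Ys n)))"
      proof -
      have "\<forall>n. norm (V (Ys n)) \<le> M" using bnd Ys by simp
      then show ?thesis unfolding bounded_iff by auto
    qed
    then obtain L r where r: "strict_mono r" and Lr: "((\<lambda>n. V (Ys n)) \<circ> r) \<longlonglongrightarrow> L"
      using bounded_imp_convergent_subsequence by blast
    have Yr: "(Ys \<circ> r) \<longlonglongrightarrow> X" using LIMSEQ_subseq_LIMSEQ[OF Ylim r] .
    have fr: "(\<lambda>n. f ((Ys \<circ> r) n)) \<longlonglongrightarrow> f X" using fcont[OF Yr] Ysb by simp
    have "L \<in> subdiff F X"
      unfolding subdiff_def
    proof (clarify)
      fix W
      show "ereal (inner (W - X) L) + F X \<le> F W"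
      proof (cases "F W = \<infinity>")
        case True then show ?thesis by simp
      next
        case False
        then obtain b where b: "F W = ereal b" using nm[of W] by (cases "F W") auto
        have ineq: "f ((Ys \<circ> r) n) + inner (W - (Ys \<circ> r) n) (((\<lambda>n. V (Ys n)) \<circ> r) n) \<le> b" for n
          using sub_real[OF sub[OF Ysb[of "r n"]] fin[OF Ysb[of "r n"]] b] by (simp add: f_def)
        have lim: "(\<lambda>n. f ((Ys \<circ> r) n) + inner (W - (Ys \<circ> r) n) (((\<lambda>n. V (Ys n)) \<circ> r) n))
                    \<longlonglongrightarrow> f X + inner (W - X) L"
          by (intro tendsto_intros fr Yr Lr)
        have "f X + inner (W - X) L \<le> b"
          by (rule LIMSEQ_le_const2[OF lim]) (use ineq in auto)
        moreover have "F X = ereal (f X)" using fin[OF X0] by (simp add: f_def)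
        ultimately show ?thesis using b by (simp add: add.commute)
      qed
    qed
    then have "L = V X" by (rule uniq)
    then have "((\<lambda>n. V (Ys n)) \<circ> r) \<longlonglongrightarrow> V X" using Lr by simp
    from LIMSEQ_D[OF this e] obtain N where "\<forall>n\<ge>N. norm ((((\<lambda>n. V (Ys n)) \<circ> r) n) - V X) < e"
      by blast
    then have "norm (V (Ys (r N)) - V X) < e" by simp
    moreover have "norm (V (Ys (r N)) - V X) > e" using Ys by simp
    ultimately show False by simp
  qed
  show ?thesis
    unfolding has_derivative_at_alt f_def[symmetric]
  proof (intro conjI allI impI)
    show "bounded_linear (inner (V X))" by (rule bounded_linear_inner_right)
    fix e :: real assume e: "e > 0"
    obtain d where d: "d > 0" "\<forall>Y. norm (Y - X) < d \<longrightarrow> norm (V Y - V X) \<le> e" using step2[OF e] by blast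
    define d' where "d' = min d r0"
    have "d' > 0" using d r0 by (simp add: d'_def)
    moreover have "norm (f Y - f X - inner (V X) (Y - X)) \<le> e * norm (Y - X)" if Y: "norm (Y - X) < d'" for Y
    proof -
      have Yb: "Y \<in> ball X r0" using Y by (simp add: d'_def dist_norm norm_minus_commute)
      have l: "f X + inner (Y - X) (V X) \<le> f Y" using sr[OF X0 Yb] .
      have u: "f Y + inner (X - Y) (V Y) \<le> f X" using sr[OF Yb X0] .
      have "inner (Y - X) (V Y - V X) \<le> norm (Y - X) * norm (V Y - V X)" by (rule norm_cauchy_schwarz)
      also have "\<dots> \<le> norm (Y - X) * e" using d Y by (intro mult_left_mono) (auto simp: d'_def)
      finally have c: "inner (Y - X) (V Y - V X) \<le> e * norm (Y - X)" by (simp add: mult.commute)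
      have "inner (X - Y) (V Y) = - inner (Y - X) (V Y)" by (simp add: inner_diff_left)
      then have "f Y - f X - inner (V X) (Y - X) \<le> inner (Y - X) (V Y - V X)"
        using u by (simp add: inner_diff_right inner_commute)
      then show ?thesis using l c by (simp add: inner_commute abs_le_iff)
    qed
    ultimately show "\<exists>d>0. \<forall>Y. norm (Y - X) < d \<longrightarrow> norm (f Y - f X - inner (V X) (Y - X)) \<le> e * norm (Y - X)"
      by blast
  qed
qed


lemma lin_iso_norm: "lin_isometry L \<Longrightarrow> norm (L u) = norm u"
  unfolding lin_isometry_def by blast

lemma lin_iso_linear: "lin_isometry L \<Longrightarrow> linear L"
  unfolding lin_isometry_def by blast

lemma lin_iso_inner:
  fixes L :: "'u::real_inner \<Rightarrow> 'v::real_inner"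
  assumes "lin_isometry L" shows "inner (L u) (L v) = inner u v"
proof -
  have l: "linear L" and n: "\<And>w. norm (L w) = norm w" using assms unfolding lin_isometry_def by auto
  have "inner (L u) (L v) = ((norm (L u + L v))\<^sup>2 - (norm (L u))\<^sup>2 - (norm (L v))\<^sup>2) / 2" by (rule dot_norm)
  also have "L u + L v = L (u + v)" using l by (simp add: linear_add)
  also have "((norm (L (u + v)))\<^sup>2 - (norm (L u))\<^sup>2 - (norm (L v))\<^sup>2) / 2
      = ((norm (u + v))\<^sup>2 - (norm u)\<^sup>2 - (norm v)\<^sup>2) / 2" using n by simp
  also have "\<dots> = inner u v" by (rule dot_norm[symmetric])
  finally show ?thesis .
qed

lemma eq_norm_lemma:
  fixes p q :: "'u::real_inner"
  assumes "norm p = norm q" "inner p q \<ge> (norm p)\<^sup>2"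
  shows "p = q"
proof -
  have "(norm (p - q))\<^sup>2 = (norm p)\<^sup>2 - 2 * inner p q + (norm q)\<^sup>2"
    by (simp add: power2_norm_eq_inner inner_diff_left inner_diff_right inner_commute)
  also have "\<dots> \<le> 0" using assms by simp
  finally have "norm (p - q) = 0" by simp
  then show ?thesis by simp
qed

lemma mid_norm_lemma:
  fixes p q :: "'u::real_inner"
  assumes "norm p = c" "norm q = c" "norm ((1/2) *\<^sub>R (p + q)) = c"
  shows "p = q"
proof -
  have a1: "(norm (p + q))\<^sup>2 = (norm p)\<^sup>2 + 2 * inner p q + (norm q)\<^sup>2"
    by (simp add: power2_norm_eq_inner inner_add_left inner_add_right inner_commute)
  have "(norm ((1/2) *\<^sub>R (p + q)))\<^sup>2 = (1/4) * (norm (p + q))\<^sup>2"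
    by (simp add: power_mult_distrib power2_eq_square)
  then have "(norm ((1/2) *\<^sub>R (p + q)))\<^sup>2 = (1/4) * ((norm p)\<^sup>2 + 2 * inner p q + (norm q)\<^sup>2)"
    using a1 by simp
  then have "c\<^sup>2 = (1/4) * (c\<^sup>2 + 2 * inner p q + c\<^sup>2)" using assms by simp
  then have "inner p q \<ge> (norm p)\<^sup>2" using assms by (simp add: field_simps)
  then show ?thesis using eq_norm_lemma assms by metis
qed

locale sds_setting =
  fixes S :: "('x::euclidean_space \<Rightarrow> 'x) set" and \<gamma> :: "'h::euclidean_space \<Rightarrow> 'x"
    and A :: "'a set" and \<Lambda> :: "'a \<Rightarrow> 'x \<Rightarrow> 'h" and \<tau> :: "'x \<Rightarrow> 'x"
    and D :: "'x set" and \<psi> :: "'x \<Rightarrow> ereal"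
  assumes grp: "isometry_group S"
    and Liso: "\<And>a. a \<in> A \<Longrightarrow> lin_isometry (\<Lambda> a)"
    and tinv: "invariant_fun S \<tau>" and torb: "\<And>x. \<tau> x \<in> orbit S x"
    and gL0: "\<And>a. a \<in> A \<Longrightarrow> \<gamma> \<circ> \<Lambda> a = \<tau>"
    and dec: "\<And>X. \<exists>a\<in>A. X = \<Lambda> a (\<gamma> X)"
    and ineqD: "\<And>X Y. inner X Y \<le> inner (\<gamma> X) (\<gamma> Y)"
    and D_inv: "invariant_set S D" and G0: "Gamma0 \<psi>"
    and psi_inv: "invariant_fun S \<psi>" and leg: "legendre \<psi>"
begin

lemma S_iso: "s \<in> S \<Longrightarrow> lin_isometry s" using grp unfolding isometry_group_def by blast

lemma S_inv: "s \<in> S \<Longrightarrow> \<exists>t\<in>S. t \<circ> s = id \<and> s \<circ> t = id"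
  using grp unfolding isometry_group_def by blast

lemma S_inv_pt: assumes "s \<in> S" obtains t where "t \<in> S" "\<And>u. t (s u) = u" "\<And>u. s (t u) = u"
  using S_inv[OF assms] by (metis comp_apply id_apply)

lemma gL: "a \<in> A \<Longrightarrow> \<gamma> (\<Lambda> a u) = \<tau> u"
  using gL0 by (metis comp_apply)

lemma tau_S: obtains s where "s \<in> S" "\<tau> u = s u"
  using torb[of u] unfolding orbit_def by blast

lemma A_ne: "\<exists>a. a \<in> A" using dec by blast

lemma L_inner: "a \<in> A \<Longrightarrow> inner (\<Lambda> a u) (\<Lambda> a v) = inner u v"
  using Liso lin_iso_inner by blast

lemma L_norm: "a \<in> A \<Longrightarrow> norm (\<Lambda> a u) = norm u"
  using Liso lin_iso_norm by blast

lemma L_lin: "a \<in> A \<Longrightarrow> linear (\<Lambda> a)"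
  using Liso lin_iso_linear by blast

lemma L_diff: "a \<in> A \<Longrightarrow> \<Lambda> a (u - v) = \<Lambda> a u - \<Lambda> a v"
  using L_lin linear_diff by blast

lemma L_add: "a \<in> A \<Longrightarrow> \<Lambda> a (u + v) = \<Lambda> a u + \<Lambda> a v"
  using L_lin linear_add by blast

lemma L_scale: "a \<in> A \<Longrightarrow> \<Lambda> a (c *\<^sub>R u) = c *\<^sub>R \<Lambda> a u"
  using L_lin linear_cmul by blast

lemma L_inj: "a \<in> A \<Longrightarrow> \<Lambda> a u = \<Lambda> a v \<Longrightarrow> u = v"
  using L_diff L_norm by (metis eq_iff_diff_eq_0 norm_eq_zero)

lemma S_inner: "s \<in> S \<Longrightarrow> inner (s u) (s v) = inner u v"
  using S_iso lin_iso_inner by blast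

lemma S_norm: "s \<in> S \<Longrightarrow> norm (s u) = norm u"
  using S_iso lin_iso_norm by blast

lemma norm_gamma: "norm (\<gamma> X) = norm X"
proof -
  obtain a where "a \<in> A" "X = \<Lambda> a (\<gamma> X)" using dec by blast
  then show ?thesis using L_norm by metis
qed

lemma norm_tau: "norm (\<tau> u) = norm u"
  by (metis tau_S S_norm)

lemma nds: "inner u v \<le> inner (\<tau> u) (\<tau> v)"
proof -
  obtain a where a: "a \<in> A" using A_ne by blast
  have "inner u v = inner (\<Lambda> a u) (\<Lambda> a v)" using L_inner[OF a] by simp
  also have "\<dots> \<le> inner (\<gamma> (\<Lambda> a u)) (\<gamma> (\<Lambda> a v))" by (rule ineqD)
  finally show ?thesis using gL[OF a] by simp
qed

lemma tau_tau: "\<tau> (\<tau> u) = \<tau> u"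
  by (metis tau_S tinv invariant_fun_def)

lemma tau_gamma: "\<tau> (\<gamma> X) = \<gamma> X"
proof -
  obtain a where "a \<in> A" "X = \<Lambda> a (\<gamma> X)" using dec by blast
  then show ?thesis using gL by metis
qed

lemma psi_S: "s \<in> S \<Longrightarrow> \<psi> (s u) = \<psi> u"
  using psi_inv unfolding invariant_fun_def by blast

lemma psi_tau: "\<psi> (\<tau> u) = \<psi> u"
  by (metis tau_S psi_S)

lemma D_S: "s \<in> S \<Longrightarrow> u \<in> D \<Longrightarrow> s u \<in> D"
  using D_inv unfolding invariant_set_def by blast

lemma D_tau: "u \<in> D \<Longrightarrow> \<tau> u \<in> D"
  by (metis tau_S D_S)

lemma gamma_lip: "norm (\<gamma> X - \<gamma> Y) \<le> norm (X - Y)"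
proof -
  have "(norm (\<gamma> X - \<gamma> Y))\<^sup>2 = (norm (\<gamma> X))\<^sup>2 - 2 * inner (\<gamma> X) (\<gamma> Y) + (norm (\<gamma> Y))\<^sup>2"
    by (simp add: power2_norm_eq_inner inner_diff_left inner_diff_right inner_commute)
  also have "\<dots> \<le> (norm X)\<^sup>2 - 2 * inner X Y + (norm Y)\<^sup>2"
    using ineqD[of X Y] norm_gamma by simp
  also have "\<dots> = (norm (X - Y))\<^sup>2"
    by (simp add: power2_norm_eq_inner inner_diff_left inner_diff_right inner_commute)
  finally show ?thesis using power2_le_imp_le by (metis norm_ge_zero)
qed

lemma gamma_L_gamma: "a \<in> A \<Longrightarrow> \<gamma> (\<Lambda> a (\<gamma> X)) = \<gamma> X"
  using gL tau_gamma by simp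

lemma common_dec:
  assumes eq: "inner X Y = inner (\<gamma> X) (\<gamma> Y)"
  shows "\<exists>a\<in>A. X = \<Lambda> a (\<gamma> X) \<and> Y = \<Lambda> a (\<gamma> Y)"
proof -
  define W where "W = X + Y"
  obtain a where a: "a \<in> A" "W = \<Lambda> a (\<gamma> W)" using dec by blast
  have nW: "(norm W)\<^sup>2 = (norm X)\<^sup>2 + (norm Y)\<^sup>2 + 2 * inner X Y"
    by (simp add: W_def power2_norm_eq_inner inner_add_left inner_add_right inner_commute)
  have gx: "inner (\<gamma> X) (\<gamma> X) = inner X X" by (metis norm_gamma power2_norm_eq_inner)
  have gy: "inner (\<gamma> Y) (\<gamma> Y) = inner Y Y" by (metis norm_gamma power2_norm_eq_inner)
  have nq: "(norm (\<gamma> X + \<gamma> Y))\<^sup>2 = (norm W)\<^sup>2"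
    using nW eq gx gy
    by (simp add: power2_norm_eq_inner inner_add_left inner_add_right inner_commute)
  have "inner (\<gamma> W) (\<gamma> X + \<gamma> Y) = inner (\<gamma> W) (\<gamma> X) + inner (\<gamma> W) (\<gamma> Y)"
    by (simp add: inner_add_right)
  also have "\<dots> \<ge> inner W X + inner W Y" using ineqD[of W X] ineqD[of W Y] by simp
  finally have "inner (\<gamma> W) (\<gamma> X + \<gamma> Y) \<ge> (norm W)\<^sup>2"
    by (simp add: W_def power2_norm_eq_inner inner_add_right)
  moreover have "norm (\<gamma> W) = norm (\<gamma> X + \<gamma> Y)"
    using nq norm_gamma[of W] by (metis norm_ge_zero power2_eq_iff_nonneg)
  ultimately have gW: "\<gamma> W = \<gamma> X + \<gamma> Y" using eq_norm_lemma norm_gamma by metis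
  have Wdec: "W = \<Lambda> a (\<gamma> X) + \<Lambda> a (\<gamma> Y)" using a gW L_add by metis
  have i1: "inner (\<Lambda> a (\<gamma> X)) X \<le> (norm X)\<^sup>2"
    using ineqD[of "\<Lambda> a (\<gamma> X)" X] gamma_L_gamma[OF a(1)] gx
    by (simp add: power2_norm_eq_inner)
  have i2: "inner (\<Lambda> a (\<gamma> Y)) Y \<le> (norm Y)\<^sup>2"
    using ineqD[of "\<Lambda> a (\<gamma> Y)" Y] gamma_L_gamma[OF a(1)] gy
    by (simp add: power2_norm_eq_inner)
  have i3: "inner (\<Lambda> a (\<gamma> X)) Y \<le> inner X Y"
    using ineqD[of "\<Lambda> a (\<gamma> X)" Y] gamma_L_gamma[OF a(1)] eq by simp
  have i4: "inner (\<Lambda> a (\<gamma> Y)) X \<le> inner X Y"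
    using ineqD[of "\<Lambda> a (\<gamma> Y)" X] gamma_L_gamma[OF a(1)] eq by (simp add: inner_commute)
  have "(norm W)\<^sup>2 = inner W W" by (simp add: power2_norm_eq_inner)
  also have "\<dots> = inner (\<Lambda> a (\<gamma> X)) X + inner (\<Lambda> a (\<gamma> Y)) Y + inner (\<Lambda> a (\<gamma> X)) Y + inner (\<Lambda> a (\<gamma> Y)) X"
    by (subst (1) Wdec) (simp add: W_def inner_add_left inner_add_right)
  finally have sum: "(norm W)\<^sup>2 = inner (\<Lambda> a (\<gamma> X)) X + inner (\<Lambda> a (\<gamma> Y)) Y + inner (\<Lambda> a (\<gamma> X)) Y + inner (\<Lambda> a (\<gamma> Y)) X" .
  have e1: "inner (\<Lambda> a (\<gamma> X)) X \<ge> (norm (\<Lambda> a (\<gamma> X)))\<^sup>2"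
    using sum nW i1 i2 i3 i4 L_norm[OF a(1)] norm_gamma by simp
  have e2: "inner (\<Lambda> a (\<gamma> Y)) Y \<ge> (norm (\<Lambda> a (\<gamma> Y)))\<^sup>2"
    using sum nW i1 i2 i3 i4 L_norm[OF a(1)] norm_gamma by simp
  have "\<Lambda> a (\<gamma> X) = X" using eq_norm_lemma[OF _ e1] L_norm[OF a(1)] norm_gamma by metis
  moreover have "\<Lambda> a (\<gamma> Y) = Y" using eq_norm_lemma[OF _ e2] L_norm[OF a(1)] norm_gamma by metis
  ultimately show ?thesis using a(1) by metis
qed

end


context sds_setting begin

lemma psi_nm: "\<psi> y \<noteq> -\<infinity>" using G0 unfolding Gamma0_def by blast

lemma epi_mem: "(y, r) \<in> epigraph \<psi> \<longleftrightarrow> \<psi> y \<le> ereal r"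
  unfolding epigraph_def by simp

lemma epi_convex: "convex (epigraph \<psi>)" using G0 unfolding Gamma0_def by blast

lemma psi_conv:
  assumes "\<psi> y1 \<le> ereal a" "\<psi> y2 \<le> ereal b" "0 \<le> t" "t \<le> 1"
  shows "\<psi> ((1 - t) *\<^sub>R y1 + t *\<^sub>R y2) \<le> ereal ((1 - t) * a + t * b)"
proof -
  have "(1 - t) *\<^sub>R (y1, a) + t *\<^sub>R (y2, b) \<in> epigraph \<psi>"
    by (rule convexD[OF epi_convex]) (use assms in \<open>auto simp: epi_mem\<close>)
  then show ?thesis by (simp add: epi_mem)
qed

lemma fin_dom: "y \<in> edom \<psi> \<Longrightarrow> \<psi> y = ereal (real_of_ereal (\<psi> y))"
  unfolding edom_def using psi_nm[of y] by (cases "\<psi> y") auto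

lemma edom_convex: "convex (edom \<psi>)"
proof (rule convexI)
  fix x y :: 'x and u v :: real
  assume x: "x \<in> edom \<psi>" and y: "y \<in> edom \<psi>" and u: "0 \<le> u" "0 \<le> v" "u + v = 1"
  have "\<psi> ((1 - v) *\<^sub>R x + v *\<^sub>R y) \<le> ereal ((1 - v) * real_of_ereal (\<psi> x) + v * real_of_ereal (\<psi> y))"
    using psi_conv[of x _ y _ v] fin_dom[OF x] fin_dom[OF y] u by simp
  moreover have "1 - v = u" using u by simp
  ultimately have "\<psi> (u *\<^sub>R x + v *\<^sub>R y) \<le> ereal ((1 - v) * real_of_ereal (\<psi> x) + v * real_of_ereal (\<psi> y))"
    by simp
  also have "\<dots> < \<infinity>" by simp
  finally show "u *\<^sub>R x + v *\<^sub>R y \<in> edom \<psi>" unfolding edom_def by simp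
qed

abbreviation "U \<equiv> interior (edom \<psi>)"

lemma U_convex: "convex U" using edom_convex by simp

lemma U_dom: "y \<in> U \<Longrightarrow> y \<in> edom \<psi>" using interior_subset by blast

lemma psi_convex_on: "convex_on U (\<lambda>y. real_of_ereal (\<psi> y))"
proof (rule convex_onI)
  fix t :: real and x y assume t: "0 < t" "t < 1" and x: "x \<in> U" and y: "y \<in> U"
  have c: "(1 - t) *\<^sub>R x + t *\<^sub>R y \<in> U" using convexD[OF U_convex x y, of "1-t" t] t by simp
  have "\<psi> ((1 - t) *\<^sub>R x + t *\<^sub>R y) \<le> ereal ((1 - t) * real_of_ereal (\<psi> x) + t * real_of_ereal (\<psi> y))"
    using psi_conv[of x _ y _ t] fin_dom[OF U_dom[OF x]] fin_dom[OF U_dom[OF y]] t by simp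
  then have "ereal (real_of_ereal (\<psi> ((1 - t) *\<^sub>R x + t *\<^sub>R y))) \<le> ereal ((1 - t) * real_of_ereal (\<psi> x) + t * real_of_ereal (\<psi> y))"
    using fin_dom[OF U_dom[OF c]] by simp
  then show "real_of_ereal (\<psi> ((1 - t) *\<^sub>R x + t *\<^sub>R y)) \<le> (1 - t) * real_of_ereal (\<psi> x) + t * real_of_ereal (\<psi> y)"
    by (simp only: ereal_less_eq(3))
qed (rule U_convex)

lemma psi_cont: "continuous_on U (\<lambda>y. real_of_ereal (\<psi> y))"
  by (rule convex_on_continuous[OF open_interior psi_convex_on])

lemma subgrad_exists:
  assumes yU: "y \<in> U" shows "\<exists>u. u \<in> subdiff \<psi> y"
proof -
  define r where "r = real_of_ereal (\<psi> y)"
  have psiy: "\<psi> y = ereal r" using fin_dom[OF U_dom[OF yU]] unfolding r_def .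
  define E where "E = epigraph \<psi>"
  have pE: "(y, r) \<in> E" using psiy by (simp add: E_def epi_mem)
  have p1E: "(y, r + 1) \<in> E" using psiy by (simp add: E_def epi_mem)
  have notri: "(y, r) \<notin> rel_interior E"
  proof
    assume "(y, r) \<in> rel_interior E"
    then obtain T where T: "open T" "(y, r) \<in> T" "T \<inter> affine hull E \<subseteq> E"
      unfolding mem_rel_interior by blast
    obtain e where e: "e > 0" "ball (y, r) e \<subseteq> T" using T(1,2) open_contains_ball by blast
    define q where "q = (1 + e/2) *\<^sub>R (y, r) + (- (e/2)) *\<^sub>R (y, r + 1)"
    have q: "q = (y, r - e/2)" unfolding q_def by (simp add: algebra_simps)
    have "q \<in> affine hull E"
      unfolding q_def
      by (rule mem_affine[OF affine_affine_hull]) (auto intro: hull_inc[OF pE] hull_inc[OF p1E])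
    moreover have "q \<in> T"
    proof -
      have "dist (y, r) q = e/2" using e by (simp add: q dist_Pair_Pair)
      then have "q \<in> ball (y, r) e" using e(1) by simp
      then show ?thesis using e(2) by blast
    qed
    ultimately have "q \<in> E" using T(3) by blast
    then have "\<psi> y \<le> ereal (r - e/2)" by (simp add: q E_def epi_mem)
    then show False using psiy e by simp
  qed
  have cE: "convex E" using epi_convex by (simp add: E_def)
  obtain a where a: "a \<noteq> 0" "\<And>z. z \<in> E \<Longrightarrow> inner a (y, r) \<le> inner a z"
     "\<And>z. z \<in> rel_interior E \<Longrightarrow> inner a (y, r) < inner a z"
    by (rule supporting_hyperplane_rel_boundary[OF cE pE notri], iprover)
  define a1 where "a1 = fst a"
  define a0 where "a0 = snd a"
  have aeq: "a = (a1, a0)" by (simp add: a1_def a0_def)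
  have key: "inner a1 y + a0 * r \<le> inner a1 z + a0 * c" if "\<psi> z \<le> ereal c" for z c
    using a(2)[of "(z, c)"] that by (simp add: aeq E_def epi_mem)
  have "a0 * r \<le> a0 * (r + 1)" using key[of y "r+1"] psiy by simp
  then have a0nn: "a0 \<ge> 0" by (simp add: algebra_simps)
  have a0pos: "a0 > 0"
  proof (rule ccontr)
    assume "\<not> a0 > 0"
    then have a00: "a0 = 0" using a0nn by simp
    then have a1nz: "a1 \<noteq> 0" using a(1) aeq by (auto simp: zero_prod_def)
    obtain e where e: "e > 0" "ball y e \<subseteq> edom \<psi>" using yU mem_interior by blast
    define w where "w = y - (e / 2 / norm a1) *\<^sub>R a1"
    have "dist y w = e/2" using a1nz e by (simp add: w_def dist_norm)
    then have "w \<in> ball y e" using e(1) by simp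
    then have wd: "w \<in> edom \<psi>" using e(2) by blast
    have "\<psi> w \<le> ereal (real_of_ereal (\<psi> w))" by (rule eq_refl[OF fin_dom[OF wd]])
    from key[OF this] a00 have "inner a1 y \<le> inner a1 w" by simp
    moreover have "inner a1 w = inner a1 y - (e / 2 / norm a1) * (norm a1)\<^sup>2"
      by (simp add: w_def inner_diff_right power2_norm_eq_inner)
    moreover have "(e / 2 / norm a1) * (norm a1)\<^sup>2 > 0" using a1nz e by simp
    ultimately show False by linarith
  qed
  define u where "u = (- 1 / a0) *\<^sub>R a1"
  have "u \<in> subdiff \<psi> y"
    unfolding subdiff_def
  proof (clarify)
    fix z
    show "ereal (inner (z - y) u) + \<psi> y \<le> \<psi> z"
    proof (cases "\<psi> z = \<infinity>")
      case True then show ?thesis by simp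
    next
      case False
      then obtain c where c: "\<psi> z = ereal c" using psi_nm[of z] by (cases "\<psi> z") auto
      have "inner a1 y + a0 * r \<le> inner a1 z + a0 * c" using key[of z c] c by simp
      have iu: "inner (z - y) u = - (1 / a0) * (inner a1 z - inner a1 y)"
        by (simp add: u_def inner_diff_left inner_diff_right inner_commute)
      have "a0 * inner (z - y) u = - (inner a1 z - inner a1 y)"
        unfolding iu using a0pos by simp
      then have "a0 * (inner (z - y) u + r) \<le> a0 * c"
        using \<open>inner a1 y + a0 * r \<le> inner a1 z + a0 * c\<close> by (simp add: distrib_left)
      then have "inner (z - y) u + r \<le> c" using a0pos by simp
      then show ?thesis using c psiy by simp
    qed
  qed
  then show ?thesis by blast
qed

lemma subdiff_unique: "u \<in> subdiff \<psi> y \<Longrightarrow> v \<in> subdiff \<psi> y \<Longrightarrow> u = v"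
  using leg unfolding legendre_def by blast

lemma strict_conv: "strictly_convex_on_e U \<psi>"
proof -
  have "U \<subseteq> {x. subdiff \<psi> x \<noteq> {}}" using subgrad_exists by blast
  then show ?thesis using leg U_convex unfolding legendre_def by blast
qed

end

lemma egrad_eq:
  fixes g :: "'u::euclidean_space \<Rightarrow> ereal"
  assumes "((\<lambda>y. real_of_ereal (g y)) has_derivative (\<lambda>h. inner G h)) (at X)"
  shows "egrad g X = G"
proof -
  have ex: "\<exists>u. ((\<lambda>y. real_of_ereal (g y)) has_derivative (\<lambda>h. inner u h)) (at X)" using assms by blast
  have "((\<lambda>y. real_of_ereal (g y)) has_derivative (\<lambda>h. inner (egrad g X) h)) (at X)"
    unfolding egrad_def by (rule someI_ex[OF ex])
  then have "(\<lambda>h. inner (egrad g X) h) = (\<lambda>h. inner G h)" using assms has_derivative_unique by blast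
  then have "inner (egrad g X) (egrad g X - G) = inner G (egrad g X - G)" by metis
  then have "inner (egrad g X - G) (egrad g X - G) = 0" by (simp add: inner_diff_left)
  then show ?thesis by simp
qed

lemma subdiff_mid:
  assumes "V1 \<in> subdiff F X" "V2 \<in> subdiff F X" "F X = ereal c"
  shows "(1/2) *\<^sub>R (V1 + V2) \<in> subdiff F X"
  unfolding subdiff_def
proof (clarify)
  fix W
  show "ereal (inner (W - X) ((1/2) *\<^sub>R (V1 + V2))) + F X \<le> F W"
  proof (cases "F W")
    case (real b)
    have "c + inner (W - X) V1 \<le> b" using sub_real[OF assms(1) assms(3) real] .
    moreover have "c + inner (W - X) V2 \<le> b" using sub_real[OF assms(2) assms(3) real] .
    moreover have "inner (W - X) ((1/2) *\<^sub>R (V1 + V2)) = (1/2) * inner (W - X) V1 + (1/2) * inner (W - X) V2"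
      by (simp add: inner_add_right inner_scaleR_right)
    ultimately have "inner (W - X) ((1/2) *\<^sub>R (V1 + V2)) + c \<le> b"
      by linarith
    then show ?thesis using real assms(3) by simp
  next
    case PInf then show ?thesis by simp
  next
    case MInf
    have "ereal (inner (W - X) V1) + F X \<le> F W" using assms(1) unfolding subdiff_def by blast
    then show ?thesis using MInf assms(3) by simp
  qed
qed

context sds_setting begin

definition Vpsi :: "'x \<Rightarrow> 'x" where "Vpsi y = (SOME u. u \<in> subdiff \<psi> y)"

lemma Vpsi_sub: "y \<in> U \<Longrightarrow> Vpsi y \<in> subdiff \<psi> y"
  unfolding Vpsi_def using subgrad_exists by (metis someI_ex)

lemma psi_cont_eps:
  assumes "x \<in> U" "e > 0"
  shows "\<exists>d>0. \<forall>y\<in>U. norm (y - x) < d \<longrightarrow> \<bar>real_of_ereal (\<psi> y) - real_of_ereal (\<psi> x)\<bar> < e"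
  using psi_cont assms unfolding continuous_on_iff by (simp add: dist_norm)

lemma U_ball: assumes "x \<in> U" obtains r where "r > 0" "ball x r \<subseteq> U"
  using assms open_contains_ball open_interior by blast

lemma psi_deriv:
  assumes xU: "x \<in> U"
  shows "((\<lambda>y. real_of_ereal (\<psi> y)) has_derivative (\<lambda>h. inner (Vpsi x) h)) (at x)"
proof -
  obtain r where r: "r > 0" "ball x r \<subseteq> U" using U_ball[OF xU] by blast
  show ?thesis
  proof (rule diff_lemma[OF r(1)])
    fix Y assume "Y \<in> ball x r"
    then have Y: "Y \<in> U" using r by blast
    show "\<psi> Y = ereal (real_of_ereal (\<psi> Y))" using fin_dom[OF U_dom[OF Y]] .
    show "Vpsi Y \<in> subdiff \<psi> Y" using Vpsi_sub[OF Y] .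
  next
    fix Y show "\<psi> Y \<noteq> -\<infinity>" by (rule psi_nm)
  next
    fix W assume "W \<in> subdiff \<psi> x"
    then show "W = Vpsi x" using subdiff_unique Vpsi_sub[OF xU] by blast
  next
    fix e :: real assume "e > 0"
    then obtain d where d: "d > 0" "\<forall>y\<in>U. norm (y - x) < d \<longrightarrow> \<bar>real_of_ereal (\<psi> y) - real_of_ereal (\<psi> x)\<bar> < e"
      using psi_cont_eps[OF xU] by blast
    then show "\<exists>d>0. \<forall>Y\<in>ball x r. norm (Y - x) < d \<longrightarrow> \<bar>real_of_ereal (\<psi> Y) - real_of_ereal (\<psi> x)\<bar> < e"
      using r by blast
  qed
qed

lemma sub_lift:
  assumes a: "a \<in> A" and Y: "Y = \<Lambda> a (\<gamma> Y)" and u: "u \<in> subdiff \<psi> (\<gamma> Y)"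
  shows "\<Lambda> a u \<in> subdiff (\<psi> \<circ> \<gamma>) Y"
  unfolding subdiff_def
proof (clarify)
  fix W
  obtain s where s: "s \<in> S" "\<tau> u = s u" using tau_S by blast
  obtain t where t: "t \<in> S" "\<And>v. t (s v) = v" "\<And>v. s (t v) = v" using S_inv_pt[OF s(1)] by blast
  have "inner W (\<Lambda> a u) \<le> inner (\<gamma> W) (\<gamma> (\<Lambda> a u))" by (rule ineqD)
  also have "\<dots> = inner (\<gamma> W) (s u)" using gL[OF a] s by simp
  also have "\<dots> = inner (t (\<gamma> W)) u" using S_inner[OF t(1), of "\<gamma> W" "s u"] t(2) by simp
  finally have i1: "inner W (\<Lambda> a u) \<le> inner (t (\<gamma> W)) u" .
  have i2: "inner Y (\<Lambda> a u) = inner (\<gamma> Y) u" using L_inner[OF a] Y by metis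
  have le: "inner (W - Y) (\<Lambda> a u) \<le> inner (t (\<gamma> W) - \<gamma> Y) u"
    using i1 i2 by (simp add: inner_diff_left)
  have "ereal (inner (t (\<gamma> W) - \<gamma> Y) u) + \<psi> (\<gamma> Y) \<le> \<psi> (t (\<gamma> W))"
    using u unfolding subdiff_def by blast
  also have "\<psi> (t (\<gamma> W)) = \<psi> (\<gamma> W)" using psi_S[OF t(1)] .
  finally have "ereal (inner (t (\<gamma> W) - \<gamma> Y) u) + \<psi> (\<gamma> Y) \<le> \<psi> (\<gamma> W)" .
  moreover have "ereal (inner (W - Y) (\<Lambda> a u)) + \<psi> (\<gamma> Y) \<le> ereal (inner (t (\<gamma> W) - \<gamma> Y) u) + \<psi> (\<gamma> Y)"
    using le by (intro add_right_mono) simp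
  ultimately show "ereal (inner (W - Y) (\<Lambda> a u)) + (\<psi> \<circ> \<gamma>) Y \<le> (\<psi> \<circ> \<gamma>) W" by simp
qed

lemma sub_down:
  assumes V: "V \<in> subdiff (\<psi> \<circ> \<gamma>) X" and fx: "\<psi> (\<gamma> X) = ereal c"
  shows "\<gamma> V \<in> subdiff \<psi> (\<gamma> X)" and "inner X V = inner (\<gamma> X) (\<gamma> V)"
proof -
  obtain b where b: "b \<in> A" "V = \<Lambda> b (\<gamma> V)" using dec by blast
  have st: "ereal (inner u (\<gamma> V) - inner X V) + ereal c \<le> \<psi> u" for u
  proof -
    have "ereal (inner (\<Lambda> b u - X) V) + (\<psi> \<circ> \<gamma>) X \<le> (\<psi> \<circ> \<gamma>) (\<Lambda> b u)"
      using V unfolding subdiff_def by blast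
    moreover have "(\<psi> \<circ> \<gamma>) (\<Lambda> b u) = \<psi> u" using gL[OF b(1)] psi_tau by simp
    moreover have "inner (\<Lambda> b u) V = inner u (\<gamma> V)" using L_inner[OF b(1)] b(2) by metis
    ultimately show ?thesis using fx by (simp add: inner_diff_left)
  qed
  have "ereal (inner (\<gamma> X) (\<gamma> V) - inner X V) + ereal c \<le> ereal c" using st[of "\<gamma> X"] fx by simp
  then have "inner (\<gamma> X) (\<gamma> V) \<le> inner X V" by simp
  then show eq: "inner X V = inner (\<gamma> X) (\<gamma> V)" using ineqD[of X V] by simp
  show "\<gamma> V \<in> subdiff \<psi> (\<gamma> X)"
    unfolding subdiff_def
  proof (clarify)
    fix u
    show "ereal (inner (u - \<gamma> X) (\<gamma> V)) + \<psi> (\<gamma> X) \<le> \<psi> u"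
      using st[of u] eq fx by (simp add: inner_diff_left)
  qed
qed

lemma f_uniq:
  assumes xU: "\<gamma> X \<in> U" and V1: "V1 \<in> subdiff (\<psi> \<circ> \<gamma>) X" and V2: "V2 \<in> subdiff (\<psi> \<circ> \<gamma>) X"
  shows "V1 = V2"
proof -
  define c where "c = real_of_ereal (\<psi> (\<gamma> X))"
  have fx: "\<psi> (\<gamma> X) = ereal c" using fin_dom[OF U_dom[OF xU]] unfolding c_def .
  have fx': "(\<psi> \<circ> \<gamma>) X = ereal c" using fx by simp
  define M where "M = (1/2) *\<^sub>R (V1 + V2)"
  have M: "M \<in> subdiff (\<psi> \<circ> \<gamma>) X" unfolding M_def by (rule subdiff_mid[OF V1 V2 fx'])
  have g1: "\<gamma> V1 = Vpsi (\<gamma> X)" using sub_down(1)[OF V1 fx] Vpsi_sub[OF xU] subdiff_unique by blast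
  have g2: "\<gamma> V2 = Vpsi (\<gamma> X)" using sub_down(1)[OF V2 fx] Vpsi_sub[OF xU] subdiff_unique by blast
  have g3: "\<gamma> M = Vpsi (\<gamma> X)" using sub_down(1)[OF M fx] Vpsi_sub[OF xU] subdiff_unique by blast
  show ?thesis
    by (rule mid_norm_lemma[of V1 "norm (Vpsi (\<gamma> X))"])
       (use g1 g2 g3 norm_gamma M_def in metis)+
qed

definition Asel :: "'h \<Rightarrow> 'a" where "Asel Y = (SOME a. a \<in> A \<and> Y = \<Lambda> a (\<gamma> Y))"

lemma Asel: "Asel Y \<in> A \<and> Y = \<Lambda> (Asel Y) (\<gamma> Y)"
  unfolding Asel_def using dec by (metis (mono_tags, lifting) someI_ex)

definition Vf :: "'h \<Rightarrow> 'h" where "Vf Y = \<Lambda> (Asel Y) (Vpsi (\<gamma> Y))"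

lemma Vf_sub: "\<gamma> Y \<in> U \<Longrightarrow> Vf Y \<in> subdiff (\<psi> \<circ> \<gamma>) Y"
  unfolding Vf_def using sub_lift Asel Vpsi_sub by blast

lemma f_deriv:
  assumes xU: "\<gamma> X \<in> U"
  shows "((\<lambda>Y. real_of_ereal ((\<psi> \<circ> \<gamma>) Y)) has_derivative (\<lambda>h. inner (Vf X) h)) (at X)"
proof -
  obtain r where r: "r > 0" "ball (\<gamma> X) r \<subseteq> U" using U_ball[OF xU] by blast
  have inU: "\<gamma> Y \<in> U" if "Y \<in> ball X r" for Y
  proof -
    have "norm (\<gamma> X - \<gamma> Y) \<le> norm (X - Y)" by (rule gamma_lip)
    then have "\<gamma> Y \<in> ball (\<gamma> X) r" using that by (simp add: dist_norm)
    then show ?thesis using r by blast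
  qed
  show ?thesis
  proof (rule diff_lemma[OF r(1)])
    fix Y assume "Y \<in> ball X r"
    then have Y: "\<gamma> Y \<in> U" using inU by blast
    show "(\<psi> \<circ> \<gamma>) Y = ereal (real_of_ereal ((\<psi> \<circ> \<gamma>) Y))" using fin_dom[OF U_dom[OF Y]] by simp
    show "Vf Y \<in> subdiff (\<psi> \<circ> \<gamma>) Y" using Vf_sub[OF Y] .
  next
    fix Y show "(\<psi> \<circ> \<gamma>) Y \<noteq> -\<infinity>" using psi_nm by simp
  next
    fix W assume "W \<in> subdiff (\<psi> \<circ> \<gamma>) X"
    then show "W = Vf X" using f_uniq[OF xU] Vf_sub[OF xU] by blast
  next
    fix e :: real assume "e > 0"
    then obtain d where d: "d > 0" "\<forall>y\<in>U. norm (y - \<gamma> X) < d \<longrightarrow> \<bar>real_of_ereal (\<psi> y) - real_of_ereal (\<psi> (\<gamma> X))\<bar> < e"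
      using psi_cont_eps[OF xU] by blast
    have "\<forall>Y\<in>ball X r. norm (Y - X) < d \<longrightarrow> \<bar>real_of_ereal ((\<psi> \<circ> \<gamma>) Y) - real_of_ereal ((\<psi> \<circ> \<gamma>) X)\<bar> < e"
    proof (intro ballI impI)
      fix Y assume Y: "Y \<in> ball X r" "norm (Y - X) < d"
      have "norm (\<gamma> Y - \<gamma> X) \<le> norm (Y - X)" by (rule gamma_lip)
      then show "\<bar>real_of_ereal ((\<psi> \<circ> \<gamma>) Y) - real_of_ereal ((\<psi> \<circ> \<gamma>) X)\<bar> < e"
        using d inU[OF Y(1)] Y(2) by simp
    qed
    then show "\<exists>d>0. \<forall>Y\<in>ball X r. norm (Y - X) < d \<longrightarrow> \<bar>real_of_ereal ((\<psi> \<circ> \<gamma>) Y) - real_of_ereal ((\<psi> \<circ> \<gamma>) X)\<bar> < e"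
      using d(1) by blast
  qed
qed

lemma egrad_psi: "x \<in> U \<Longrightarrow> egrad \<psi> x = Vpsi x"
  using egrad_eq psi_deriv by blast

lemma egrad_f: "\<gamma> X \<in> U \<Longrightarrow> egrad (\<psi> \<circ> \<gamma>) X = Vf X"
  by (rule egrad_eq) (use f_deriv in simp)

end

lemma ereal_mm: "e \<noteq> -\<infinity> \<Longrightarrow> e - ereal c - ereal d = e + ereal (- c - d)"
  by (cases e) auto

context sds_setting begin

lemma G_Lam:
  assumes xU: "\<gamma> X \<in> U" and a: "a \<in> A" and Xa: "X = \<Lambda> a (\<gamma> X)"
  shows "\<Lambda> a (Vpsi (\<gamma> X)) = Vf X"
  using f_uniq[OF xU sub_lift[OF a Xa Vpsi_sub[OF xU]] Vf_sub[OF xU]] .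

lemma fX_fin: "\<gamma> X \<in> U \<Longrightarrow> \<psi> (\<gamma> X) = ereal (real_of_ereal (\<psi> (\<gamma> X)))"
  using fin_dom U_dom by blast

lemma gG: assumes xU: "\<gamma> X \<in> U" shows "\<gamma> (Vf X) = Vpsi (\<gamma> X)"
  using sub_down(1)[OF Vf_sub[OF xU] fX_fin[OF xU]] Vpsi_sub[OF xU] subdiff_unique by blast

lemma XG: assumes xU: "\<gamma> X \<in> U" shows "inner X (Vf X) = inner (\<gamma> X) (Vpsi (\<gamma> X))"
  using sub_down(2)[OF Vf_sub[OF xU] fX_fin[OF xU]] gG[OF xU] by simp

lemma tau_g: assumes xU: "\<gamma> X \<in> U" shows "\<tau> (Vpsi (\<gamma> X)) = Vpsi (\<gamma> X)"
proof -
  obtain a where a: "a \<in> A" "X = \<Lambda> a (\<gamma> X)" using dec by blast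
  have "\<tau> (Vpsi (\<gamma> X)) = \<gamma> (\<Lambda> a (Vpsi (\<gamma> X)))" using gL[OF a(1)] by simp
  also have "\<dots> = \<gamma> (Vf X)" using G_Lam[OF xU a] by simp
  finally show ?thesis using gG[OF xU] by simp
qed

lemma inj_lemma:
  assumes xU: "\<gamma> X \<in> U" and c: "c \<in> A" and cG: "\<Lambda> c (Vpsi (\<gamma> X)) = Vf X"
  shows "\<Lambda> c (\<gamma> X) = X"
proof (rule ccontr)
  define x where "x = \<gamma> X"
  define g where "g = Vpsi x"
  define G where "G = Vf X"
  define X' where "X' = \<Lambda> c x"
  assume "\<Lambda> c (\<gamma> X) \<noteq> X"
  then have ne: "X' \<noteq> X" by (simp add: X'_def x_def)
  have xU': "x \<in> U" using xU x_def by simp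
  define px where "px = real_of_ereal (\<psi> x)"
  have fx: "\<psi> x = ereal px" using fin_dom[OF U_dom[OF xU']] unfolding px_def .
  obtain r where r: "r > 0" "ball x r \<subseteq> U" using U_ball[OF xU'] by blast
  define w where "w = X' - X"
  have wpos: "norm w > 0" using ne by (simp add: w_def)
  define t where "t = min (1/2) (r / (2 * norm w))"
  have t: "0 < t" "t < 1" using r wpos by (auto simp: t_def)
  define Xt where "Xt = X + t *\<^sub>R w"
  have "norm (Xt - X) = t * norm w" using t by (simp add: Xt_def)
  also have "\<dots> \<le> r / (2 * norm w) * norm w"
  proof (rule mult_right_mono)
    show "t \<le> r / (2 * norm w)" by (simp add: t_def)
  qed simp
  also have "\<dots> = r / 2" using wpos by simp
  finally have XtX: "norm (Xt - X) < r" using r by simp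
  have zU: "\<gamma> Xt \<in> U"
  proof -
    have "norm (\<gamma> Xt - \<gamma> X) \<le> norm (Xt - X)" by (rule gamma_lip)
    then have "\<gamma> Xt \<in> ball x r" using XtX by (simp add: x_def dist_norm norm_minus_commute)
    then show ?thesis using r by blast
  qed
  define z where "z = \<gamma> Xt"
  define pt where "pt = real_of_ereal (\<psi> z)"
  have fz: "\<psi> z = ereal pt" using fin_dom[OF U_dom[OF zU]] unfolding pt_def z_def .
  have fX': "\<psi> (\<gamma> X') = ereal px" using gL[OF c] psi_tau fx by (simp add: X'_def)
  define Vt where "Vt = Vf Xt"
  have Vt: "Vt \<in> subdiff (\<psi> \<circ> \<gamma>) Xt" using Vf_sub[OF zU] by (simp add: Vt_def)
  have ftz: "(\<psi> \<circ> \<gamma>) Xt = ereal pt" using fz by (simp add: z_def)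
  have s1: "pt + inner (X - Xt) Vt \<le> px" using sub_real[OF Vt ftz, of X] fx by (simp add: x_def)
  have s2: "pt + inner (X' - Xt) Vt \<le> px" using sub_real[OF Vt ftz, of X'] fX' by simp
  have e1: "inner (X - Xt) Vt = - t * inner w Vt" by (simp add: Xt_def)
  have e2: "inner (X' - Xt) Vt = (1 - t) * inner w Vt"
    by (simp add: Xt_def w_def algebra_simps inner_diff_left)
  have ptle: "pt \<le> px"
  proof (cases "inner w Vt \<ge> 0")
    case True
    have "(1 - t) * inner w Vt \<ge> 0" using True t by simp
    then show ?thesis using s2 e2 by linarith
  next
    case False
    have "t * inner w Vt \<le> 0" using False t by (simp add: mult_nonneg_nonpos)
    then show ?thesis using s1 e1 by simp
  qed
  have Gsub: "G \<in> subdiff (\<psi> \<circ> \<gamma>) X" using Vf_sub[OF xU] by (simp add: G_def)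
  have ffx: "(\<psi> \<circ> \<gamma>) X = ereal px" using fx by (simp add: x_def)
  have XG': "inner X G = inner x g" using XG[OF xU] by (simp add: G_def g_def x_def)
  have X'G: "inner X' G = inner x g"
  proof -
    have "G = \<Lambda> c g" using cG by (simp add: G_def g_def x_def)
    then show ?thesis by (simp add: X'_def L_inner[OF c])
  qed
  have wG: "inner w G = 0" using XG' X'G by (simp add: w_def inner_diff_left)
  have "px + inner (Xt - X) G \<le> pt" using sub_real[OF Gsub ffx ftz] .
  then have ptge: "px \<le> pt" using wG by (simp add: Xt_def)
  have pteq: "pt = px" using ptle ptge by simp
  have gGt: "\<gamma> G = g" using gG[OF xU] by (simp add: G_def g_def x_def)
  have "inner Xt G \<le> inner (\<gamma> Xt) (\<gamma> G)" by (rule ineqD)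
  moreover have "inner Xt G = inner x g" using XG' wG by (simp add: Xt_def inner_add_left)
  ultimately have zg1: "inner x g \<le> inner z g" using gGt by (simp add: z_def)
  have gsub: "g \<in> subdiff \<psi> x" using Vpsi_sub[OF xU'] by (simp add: g_def)
  have "px + inner (z - x) g \<le> pt" using sub_real[OF gsub fx fz] .
  then have zg: "inner (z - x) g = 0" using zg1 pteq by (simp add: inner_diff_left)
  have zx: "z = x"
  proof (rule ccontr)
    assume zx: "z \<noteq> x"
    define m where "m = (1 - 1/2) *\<^sub>R x + (1/2) *\<^sub>R z"
    have sc: "\<forall>x\<in>U. \<forall>y\<in>U. \<forall>t::real. x \<noteq> y \<and> 0 < t \<and> t < 1 \<longrightarrow>
        \<psi> ((1 - t) *\<^sub>R x + t *\<^sub>R y) < ereal (1 - t) * \<psi> x + ereal t * \<psi> y"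
      using strict_conv unfolding strictly_convex_on_e_def .
    have zU': "z \<in> U" using zU by (simp add: z_def)
    have "\<psi> m < ereal (1 - 1/2) * \<psi> x + ereal (1/2) * \<psi> z"
      unfolding m_def by (rule sc[rule_format, OF xU' zU']) (use zx in simp)
    also have "\<dots> = ereal px" using fx fz pteq by simp
    finally have lt: "\<psi> m < ereal px" .
    have mU: "m \<in> U" using convexD[OF U_convex xU' zU[folded z_def], of "1 - 1/2" "1/2"] by (simp add: m_def)
    have "inner (m - x) g = (1/2) * inner (z - x) g"
      by (simp add: m_def algebra_simps inner_diff_left inner_add_left)
    then have "inner (m - x) g = 0" using zg by simp
    moreover have "ereal (inner (m - x) g) + \<psi> x \<le> \<psi> m" using gsub unfolding subdiff_def by blast
    ultimately show False using lt fx by simp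
  qed
  have nXt: "norm Xt = norm X"
    using norm_gamma[of Xt] norm_gamma[of X] zx by (simp add: z_def x_def)
  have nX': "norm X' = norm X" using L_norm[OF c] norm_gamma by (simp add: X'_def x_def)
  have nX2: "inner X' X' = inner X X" using nX' by (metis power2_norm_eq_inner)
  have ww: "(norm w)\<^sup>2 = 2 * (norm X)\<^sup>2 - 2 * inner X X'"
    using nX2 by (simp add: w_def power2_norm_eq_inner inner_diff_left inner_diff_right inner_commute)
  define AA where "AA = (norm X)\<^sup>2"
  define II where "II = inner X X'"
  define k where "k = AA - II"
  have "(norm w)\<^sup>2 > 0" using wpos by simp
  then have kpos: "k > 0" using ww unfolding k_def AA_def II_def by linarith
  have h1: "(norm Xt)\<^sup>2 = AA + 2 * t * inner X w + t\<^sup>2 * (norm w)\<^sup>2"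
  proof -
    have "(norm Xt)\<^sup>2 = inner Xt Xt" by (rule power2_norm_eq_inner)
    also have "\<dots> = inner X X + 2 * t * inner X w + t\<^sup>2 * inner w w"
      by (simp add: Xt_def inner_add_left inner_add_right inner_commute power2_eq_square algebra_simps)
    also have "\<dots> = AA + 2 * t * inner X w + t\<^sup>2 * (norm w)\<^sup>2"
      by (simp add: AA_def power2_norm_eq_inner)
    finally show ?thesis .
  qed
  have h2: "inner X w = II - AA" by (simp add: II_def AA_def w_def inner_diff_right power2_norm_eq_inner)
  have h3: "2 * t * (II - AA) + t\<^sup>2 * (2 * AA - 2 * II) = - 2 * (t * (1 - t) * k)"
    by (simp add: k_def power2_eq_square algebra_simps)
  have h4: "t * (1 - t) * k > 0" using t kpos by simp
  have "(norm Xt)\<^sup>2 < AA" using h1 h2 h3 h4 ww by (simp add: AA_def II_def)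
  moreover have "(norm Xt)\<^sup>2 = AA" using nXt by (simp add: AA_def)
  ultimately show False by simp
qed

end

context sds_setting begin

lemma sing_lemma:
  assumes xU: "\<gamma> X \<in> U" and a: "a \<in> A" "X = \<Lambda> a (\<gamma> X)" and c: "c \<in> A" "X = \<Lambda> c (\<gamma> X)"
    and zD: "z \<in> D"
    and uniq: "\<And>y. y \<in> D \<Longrightarrow> \<psi> y = \<psi> z \<Longrightarrow> inner y (Vpsi (\<gamma> X)) \<ge> inner z (Vpsi (\<gamma> X)) \<Longrightarrow> y = z"
  shows "\<Lambda> a z = \<Lambda> c z"
proof -
  define g where "g = Vpsi (\<gamma> X)"
  have ag: "\<Lambda> a g = Vf X" using G_Lam[OF xU a] by (simp add: g_def)
  have cg: "\<Lambda> c g = Vf X" using G_Lam[OF xU c] by (simp add: g_def)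
  have tg: "\<tau> g = g" using tau_g[OF xU] by (simp add: g_def)
  have uq: "\<And>y. y \<in> D \<Longrightarrow> \<psi> y = \<psi> z \<Longrightarrow> inner y g \<ge> inner z g \<Longrightarrow> y = z"
    using uniq by (simp add: g_def)
  have tz: "\<tau> z = z"
  proof (rule uq)
    show "\<tau> z \<in> D" using D_tau[OF zD] .
    show "\<psi> (\<tau> z) = \<psi> z" by (rule psi_tau)
    show "inner z g \<le> inner (\<tau> z) g" using nds[of z g] tg by simp
  qed
  define Orb where "Orb = orbit S z"
  have Oprop: "y \<in> D \<and> \<psi> y = \<psi> z \<and> \<tau> y = z \<and> norm y = norm z \<and> inner y g \<le> inner z g" if yO: "y \<in> Orb" for y
  proof -
    obtain s where s: "s \<in> S" "y = s z" using yO unfolding Orb_def orbit_def by blast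
    have "\<tau> (s z) = \<tau> z" using tinv s(1) unfolding invariant_fun_def by blast
    then have ty: "\<tau> y = z" using s(2) tz by simp
    have "inner y g \<le> inner (\<tau> y) (\<tau> g)" by (rule nds)
    then have "inner y g \<le> inner z g" using ty tg by simp
    then show ?thesis using s ty D_S[OF s(1) zD] psi_S[OF s(1)] S_norm[OF s(1)] by simp
  qed
  have Ouq: "y = z" if "y \<in> Orb" "inner y g \<ge> inner z g" for y
    using uq Oprop[OF that(1)] that(2) by blast
  have zO: "z \<in> Orb"
  proof -
    have "id \<in> S" using grp unfolding isometry_group_def by blast
    then have "z = id z \<and> id \<in> S" by simp
    then show ?thesis unfolding Orb_def orbit_def by blast
  qed
  have "\<forall>y\<in>Orb. norm y \<le> norm z" using Oprop by simp
  then have Obd: "bounded Orb" unfolding bounded_iff by blast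
  have Ocl: "closed Orb"
    unfolding closure_subset_eq[symmetric]
  proof
    fix w assume w: "w \<in> closure Orb"
    then have app: "\<forall>e>0. \<exists>y\<in>Orb. dist y w < e" using closure_approachable by blast
    have nw: "norm w = norm z"
    proof (rule ccontr)
      assume "norm w \<noteq> norm z"
      then have "\<bar>norm w - norm z\<bar> > 0" by simp
      then obtain y where y: "y \<in> Orb" "dist y w < \<bar>norm w - norm z\<bar>" using app by blast
      have "\<bar>norm y - norm w\<bar> \<le> norm (y - w)" by (rule norm_triangle_ineq3)
      then show False using y Oprop[OF y(1)] by (simp add: dist_norm)
    qed
    have ge: "inner z (\<tau> w) \<ge> (norm z)\<^sup>2"
    proof (rule ccontr)
      assume "\<not> ?thesis"
      then have pos: "(norm z)\<^sup>2 - inner z (\<tau> w) > 0" by simp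
      have nz: "norm z > 0"
      proof (rule ccontr)
        assume "\<not> norm z > 0"
        then have "z = 0" by simp
        then show False using pos by simp
      qed
      define e where "e = ((norm z)\<^sup>2 - inner z (\<tau> w)) / (2 * norm z)"
      have e: "e > 0" using pos nz by (simp add: e_def)
      obtain y where y: "y \<in> Orb" "dist y w < e" using app e by blast
      have "inner y w \<le> inner (\<tau> y) (\<tau> w)" by (rule nds)
      then have i1: "inner y w \<le> inner z (\<tau> w)" using Oprop[OF y(1)] by simp
      have "inner y w = inner w w + inner (y - w) w" by (simp add: inner_diff_left)
      moreover have "- inner (y - w) w \<le> norm (y - w) * norm w"
        using norm_cauchy_schwarz[of "w - y" w] by (simp add: inner_diff_left norm_minus_commute)
      moreover have "norm (y - w) * norm w \<le> e * norm z"
      proof -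
        have "norm (y - w) \<le> e" using y(2) by (simp add: dist_norm)
        then have "norm (y - w) * norm w \<le> e * norm w" by (rule mult_right_mono) simp
        then show ?thesis using nw by simp
      qed
      moreover have "inner w w = (norm z)\<^sup>2" using nw by (simp add: power2_norm_eq_inner[symmetric])
      ultimately have "inner y w \<ge> (norm z)\<^sup>2 - e * norm z" by linarith
      moreover have "2 * (e * norm z) = (norm z)\<^sup>2 - inner z (\<tau> w)" using nz by (simp add: e_def)
      ultimately show False using i1 pos by linarith
    qed
    have tw: "\<tau> w = z"
      using eq_norm_lemma[of "\<tau> w" z] ge norm_tau[of w] nw by (simp add: inner_commute)
    obtain s where s: "s \<in> S" "\<tau> w = s w" using tau_S by blast
    obtain t where t: "t \<in> S" "\<And>v. t (s v) = v" "\<And>v. s (t v) = v" using S_inv_pt[OF s(1)] by blast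
    have "w = t z" using t(2)[of w] s(2) tw by simp
    then show "w \<in> Orb" unfolding Orb_def orbit_def using t(1) by blast
  qed
  have Ocomp: "compact Orb" using Obd Ocl compact_eq_bounded_closed by blast
  define p where "p = inner (\<Lambda> a z) (\<Lambda> c z)"
  have step: "\<exists>y\<in>Orb. inner (z - y) g \<le> \<epsilon> * (p - inner y z)" if "\<epsilon> > 0" for \<epsilon>
  proof -
    define v where "v = g - \<epsilon> *\<^sub>R z"
    obtain s where s: "s \<in> S" "\<tau> v = s v" using tau_S by blast
    obtain t where t: "t \<in> S" "\<And>v. t (s v) = v" "\<And>v. s (t v) = v" using S_inv_pt[OF s(1)] by blast
    have "inner (\<Lambda> a z) (\<Lambda> c v) \<le> inner (\<gamma> (\<Lambda> a z)) (\<gamma> (\<Lambda> c v))" by (rule ineqD)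
    also have "\<dots> = inner z (s v)" using gL[OF a(1)] gL[OF c(1)] tz s by simp
    also have "\<dots> = inner (t z) v" using S_inner[OF t(1), of z "s v"] t(2) by simp
    finally have i: "inner (\<Lambda> a z) (\<Lambda> c v) \<le> inner (t z) v" .
    have "inner (\<Lambda> a z) (\<Lambda> c v) = inner (\<Lambda> a z) (\<Lambda> c g) - \<epsilon> * p"
      by (simp add: v_def L_diff[OF c(1)] L_scale[OF c(1)] inner_diff_right p_def)
    also have "inner (\<Lambda> a z) (\<Lambda> c g) = inner z g" using ag cg L_inner[OF a(1)] by metis
    finally have l: "inner (\<Lambda> a z) (\<Lambda> c v) = inner z g - \<epsilon> * p" .
    have r: "inner (t z) v = inner (t z) g - \<epsilon> * inner (t z) z" by (simp add: v_def inner_diff_right)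
    have "t z \<in> Orb" unfolding Orb_def orbit_def using t(1) by blast
    moreover have "inner (z - t z) g \<le> \<epsilon> * (p - inner (t z) z)"
      using i l r by (simp add: inner_diff_left algebra_simps)
    ultimately show ?thesis by blast
  qed
  have pge: "p \<ge> (norm z)\<^sup>2"
  proof (rule ccontr)
    assume "\<not> ?thesis"
    then have plt: "p < (norm z)\<^sup>2" by simp
    have pab: "\<bar>p\<bar> \<le> (norm z)\<^sup>2"
      using Cauchy_Schwarz_ineq2[of "\<Lambda> a z" "\<Lambda> c z"] L_norm[OF a(1)] L_norm[OF c(1)]
      by (simp add: p_def power2_eq_square)
    have nz: "norm z > 0" using plt pab by (cases "z = 0") auto
    define K where "K = Orb \<inter> {y. inner z y \<le> p}"
    have Kc: "compact K" unfolding K_def using Ocomp closed_halfspace_le by blast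
    have inK: "y \<in> K" if "y \<in> Orb" "inner (z - y) g \<le> \<epsilon> * (p - inner y z)" "\<epsilon> > 0" for y \<epsilon>
    proof -
      have "inner y g \<le> inner z g" using Oprop[OF that(1)] by simp
      then have "0 \<le> \<epsilon> * (p - inner y z)" using that(2) by (simp add: inner_diff_left)
      then have "inner y z \<le> p" using that(3) by (simp add: zero_le_mult_iff)
      then show ?thesis using that(1) by (simp add: K_def inner_commute)
    qed
    obtain y1 where y1: "y1 \<in> Orb" "inner (z - y1) g \<le> 1 * (p - inner y1 z)" using step[of 1] by auto
    have Kne: "K \<noteq> {}" using inK[OF y1] by auto
    have hc: "continuous_on K (\<lambda>y. inner (z - y) g)" by (intro continuous_intros)
    obtain y0 where y0: "y0 \<in> K" "\<And>y. y \<in> K \<Longrightarrow> inner (z - y0) g \<le> inner (z - y) g"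
      using continuous_attains_inf[OF Kc Kne hc] by blast
    have y0O: "y0 \<in> Orb" and y0p: "inner z y0 \<le> p" using y0(1) by (auto simp: K_def)
    have "y0 \<noteq> z" using y0p plt by (auto simp: power2_norm_eq_inner)
    then have mpos: "inner (z - y0) g > 0" using Ouq[OF y0O] by (force simp: inner_diff_left)
    define m where "m = inner (z - y0) g"
    define \<epsilon> where "\<epsilon> = m / (4 * (norm z)\<^sup>2)"
    have eps: "\<epsilon> > 0" using mpos nz by (simp add: \<epsilon>_def m_def)
    obtain y where y: "y \<in> Orb" "inner (z - y) g \<le> \<epsilon> * (p - inner y z)" using step[OF eps] by blast
    have yK: "y \<in> K" using inK[OF y eps] .
    have "\<bar>inner y z\<bar> \<le> (norm z)\<^sup>2"
      using Cauchy_Schwarz_ineq2[of y z] Oprop[OF y(1)] by (simp add: power2_eq_square)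
    then have "p - inner y z \<le> 2 * (norm z)\<^sup>2" using pab by linarith
    then have "\<epsilon> * (p - inner y z) \<le> \<epsilon> * (2 * (norm z)\<^sup>2)" using eps by (intro mult_left_mono) auto
    also have "\<dots> = m / 2" using nz by (simp add: \<epsilon>_def)
    finally have "inner (z - y) g \<le> m / 2" using y(2) by linarith
    moreover have "m \<le> inner (z - y) g" using y0(2)[OF yK] by (simp add: m_def)
    ultimately show False using mpos m_def by linarith
  qed
  show ?thesis
    using eq_norm_lemma[of "\<Lambda> a z" "\<Lambda> c z"] pge L_norm[OF a(1)] L_norm[OF c(1)] by (simp add: p_def)
qed

end

context sds_setting begin

lemma int_iff: "X \<in> interior (edom (\<psi> \<circ> \<gamma>)) \<longleftrightarrow> \<gamma> X \<in> U"
proof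
  assume "X \<in> interior (edom (\<psi> \<circ> \<gamma>))"
  then obtain r where r: "r > 0" "ball X r \<subseteq> edom (\<psi> \<circ> \<gamma>)" using mem_interior by blast
  obtain a where a: "a \<in> A" "X = \<Lambda> a (\<gamma> X)" using dec by blast
  have "ball (\<gamma> X) r \<subseteq> edom \<psi>"
  proof
    fix u assume u: "u \<in> ball (\<gamma> X) r"
    have "norm (\<Lambda> a u - X) = norm (u - \<gamma> X)"
      using a L_diff[OF a(1)] L_norm[OF a(1)] by metis
    then have "\<Lambda> a u \<in> ball X r" using u by (simp add: dist_norm norm_minus_commute)
    then have "\<psi> (\<gamma> (\<Lambda> a u)) < \<infinity>" using r unfolding edom_def by auto
    then show "u \<in> edom \<psi>" using gL[OF a(1)] psi_tau by (simp add: edom_def)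
  qed
  then show "\<gamma> X \<in> U" using r(1) mem_interior by blast
next
  assume xU: "\<gamma> X \<in> U"
  obtain r where r: "r > 0" "ball (\<gamma> X) r \<subseteq> U" using U_ball[OF xU] by blast
  have "ball X r \<subseteq> edom (\<psi> \<circ> \<gamma>)"
  proof
    fix Y assume Y: "Y \<in> ball X r"
    have "norm (\<gamma> X - \<gamma> Y) \<le> norm (X - Y)" by (rule gamma_lip)
    then have "\<gamma> Y \<in> ball (\<gamma> X) r" using Y by (simp add: dist_norm)
    then have "\<gamma> Y \<in> edom \<psi>" using r U_dom by blast
    then show "Y \<in> edom (\<psi> \<circ> \<gamma>)" by (simp add: edom_def)
  qed
  then show "X \<in> interior (edom (\<psi> \<circ> \<gamma>))" using r(1) mem_interior by blast
qed

lemma breg_f: "\<gamma> X \<in> U \<Longrightarrow> bregman (\<psi> \<circ> \<gamma>) Y X = \<psi> (\<gamma> Y) - \<psi> (\<gamma> X) - ereal (inner (Y - X) (Vf X))"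
  unfolding bregman_def using int_iff egrad_f by simp

lemma breg_p: "x \<in> U \<Longrightarrow> bregman \<psi> y x = \<psi> y - \<psi> x - ereal (inner (y - x) (Vpsi x))"
  unfolding bregman_def using egrad_psi by simp

lemma eind_pre: "eindicator (\<gamma> -` D) Y = eindicator D (\<gamma> Y)"
  by (simp add: eindicator_def)

lemma eind_cases: "eindicator C y = 0 \<or> eindicator C y = \<infinity>"
  by (simp add: eindicator_def)

lemma plus_inf: "(e::ereal) \<noteq> -\<infinity> \<Longrightarrow> \<infinity> + e = \<infinity>"
  by simp

lemma main_local:
  "bdist (\<gamma> -` D) (\<psi> \<circ> \<gamma>) X = bdist D \<psi> (\<gamma> X)
    \<and> (\<forall>Z. Z \<in> bproj (\<gamma> -` D) (\<psi> \<circ> \<gamma>) X \<longleftrightarrow>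
           (\<gamma> Z \<in> bproj D \<psi> (\<gamma> X) \<and> (\<exists>a\<in>A. X = \<Lambda> a (\<gamma> X) \<and> Z = \<Lambda> a (\<gamma> Z))))
    \<and> (bproj (\<gamma> -` D) (\<psi> \<circ> \<gamma>) X =
           {\<Lambda> a z | z a. z \<in> bproj D \<psi> (\<gamma> X) \<and> a \<in> adapted_indices \<gamma> A \<Lambda> X})
    \<and> (is_singleton (bproj (\<gamma> -` D) (\<psi> \<circ> \<gamma>) X) \<longleftrightarrow> is_singleton (bproj D \<psi> (\<gamma> X)))"
proof -
  define x where "x = \<gamma> X"
  define tf where "tf Y = eindicator (\<gamma> -` D) Y + bregman (\<psi> \<circ> \<gamma>) Y X" for Y
  define tp where "tp y = eindicator D y + bregman \<psi> y x" for y
  define df where "df = (INF Y. tf Y)"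
  define dp where "dp = (INF y. tp y)"
  have bdf: "bdist (\<gamma> -` D) (\<psi> \<circ> \<gamma>) X = df" by (simp add: bdist_def benv_def df_def tf_def)
  have bdp: "bdist D \<psi> (\<gamma> X) = dp" by (simp add: bdist_def benv_def dp_def tp_def x_def)
  have bpf: "bproj (\<gamma> -` D) (\<psi> \<circ> \<gamma>) X = (if df < \<infinity> then {Y. tf Y = df} else {})"
    by (simp add: bproj_def bprox_def benv_def df_def tf_def)
  have bpp: "bproj D \<psi> (\<gamma> X) = (if dp < \<infinity> then {y. tp y = dp} else {})"
    by (simp add: bproj_def bprox_def benv_def dp_def tp_def x_def)
  show ?thesis
  proof (cases "x \<in> U")
    case False
    have nI: "X \<notin> interior (edom (\<psi> \<circ> \<gamma>))" using False int_iff x_def by simp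
    have "tf Y = \<infinity>" for Y
      using eind_cases[of "\<gamma> -` D" Y] nI by (auto simp: tf_def bregman_def)
    then have dfi: "df = \<infinity>" by (simp add: df_def)
    have "tp y = \<infinity>" for y
      using eind_cases[of D y] False by (auto simp: tp_def bregman_def)
    then have dpi: "dp = \<infinity>" by (simp add: dp_def)
    show ?thesis using bdf bdp bpf bpp dfi dpi by (simp add: is_singleton_def)
  next
    case True
    then have xU: "\<gamma> X \<in> U" by (simp add: x_def)
    define g where "g = Vpsi x"
    define G where "G = Vf X"
    define px where "px = real_of_ereal (\<psi> x)"
    have fx: "\<psi> x = ereal px" using fin_dom[OF U_dom[OF True]] unfolding px_def .
    have bf: "bregman (\<psi> \<circ> \<gamma>) Y X = \<psi> (\<gamma> Y) + ereal (- px - inner (Y - X) G)" for Y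
      using breg_f[OF xU, of Y] fx ereal_mm[OF psi_nm] by (simp add: G_def x_def)
    have bp: "bregman \<psi> y x = \<psi> y + ereal (- px - inner (y - x) g)" for y
      using breg_p[OF True, of y] fx ereal_mm[OF psi_nm] by (simp add: g_def)
    have XG': "inner X G = inner x g" using XG[OF xU] by (simp add: G_def g_def x_def)
    have gG': "\<gamma> G = g" using gG[OF xU] by (simp add: G_def g_def x_def)
    have GL: "\<Lambda> a g = G" if "a \<in> A" "X = \<Lambda> a x" for a
      using G_Lam[OF xU that(1) that(2)[unfolded x_def]] by (simp add: G_def g_def x_def)
    have T1: "tp (\<gamma> Y) \<le> tf Y" for Y
    proof -
      have "inner Y G \<le> inner (\<gamma> Y) g" using ineqD[of Y G] gG' by simp
      then have "- px - inner (\<gamma> Y - x) g \<le> - px - inner (Y - X) G"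
        using XG' by (simp add: inner_diff_left)
      then have "bregman \<psi> (\<gamma> Y) x \<le> bregman (\<psi> \<circ> \<gamma>) Y X"
        unfolding bf bp by (intro add_left_mono) simp
      then show ?thesis unfolding tf_def tp_def eind_pre by (rule add_left_mono)
    qed
    have T2: "tf (\<Lambda> a y) = tp y" if a: "a \<in> A" "X = \<Lambda> a x" and y: "y \<in> D" for a y
    proof -
      have "\<gamma> (\<Lambda> a y) = \<tau> y" using gL[OF a(1)] .
      then have e1: "eindicator (\<gamma> -` D) (\<Lambda> a y) = eindicator D y"
        using D_tau[OF y] y by (simp add: eindicator_def)
      have d1: "\<Lambda> a y - X = \<Lambda> a (y - x)" by (subst a(2)) (simp add: L_diff[OF a(1)])
      have "inner (\<Lambda> a y - X) G = inner (\<Lambda> a (y - x)) (\<Lambda> a g)"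
        unfolding d1 GL[OF a] ..
      also have "\<dots> = inner (y - x) g" using L_inner[OF a(1)] .
      finally have "bregman (\<psi> \<circ> \<gamma>) (\<Lambda> a y) X = bregman \<psi> y x"
        unfolding bf bp using gL[OF a(1)] psi_tau by simp
      then show ?thesis using e1 by (simp add: tf_def tp_def)
    qed
    have T3: "tp y = \<infinity>" if "y \<notin> D" for y
      using that bp[of y] psi_nm[of y] by (simp add: tp_def eindicator_def)
    obtain a0 where a0x: "a0 \<in> A" "X = \<Lambda> a0 (\<gamma> X)" using dec by blast
    then have a0: "a0 \<in> A" "X = \<Lambda> a0 x" by (simp_all add: x_def)
    have dle: "dp \<le> df" unfolding df_def dp_def
    proof (rule INF_greatest)
      fix Y
      have "(INF y. tp y) \<le> tp (\<gamma> Y)" by (rule INF_lower) simp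
      also have "\<dots> \<le> tf Y" by (rule T1)
      finally show "(INF y. tp y) \<le> tf Y" .
    qed
    have dge: "df \<le> dp" unfolding df_def dp_def
    proof (rule INF_greatest)
      fix y
      show "(INF Y. tf Y) \<le> tp y"
      proof (cases "y \<in> D")
        case True
        then have "tf (\<Lambda> a0 y) = tp y" using T2[OF a0] by simp
        moreover have "(INF Y. tf Y) \<le> tf (\<Lambda> a0 y)" by (rule INF_lower) simp
        ultimately show ?thesis by simp
      next
        case False then show ?thesis using T3 by simp
      qed
    qed
    have deq: "df = dp" using dle dge by simp
    have tpge: "dp \<le> tp y" for y unfolding dp_def by (rule INF_lower) simp
    show ?thesis
    proof (cases "dp < \<infinity>")
      case False
      then show ?thesis using bdf bdp bpf bpp deq by (simp add: is_singleton_def)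
    next
      case dfin: True
      have PF: "bproj (\<gamma> -` D) (\<psi> \<circ> \<gamma>) X = {Y. tf Y = dp}" using bpf deq dfin by simp
      have PP: "bproj D \<psi> (\<gamma> X) = {y. tp y = dp}" using bpp dfin by simp
      have fwd: "\<gamma> Z \<in> bproj D \<psi> (\<gamma> X) \<and> (\<exists>c\<in>A. X = \<Lambda> c (\<gamma> X) \<and> Z = \<Lambda> c (\<gamma> Z))"
        if Z: "Z \<in> bproj (\<gamma> -` D) (\<psi> \<circ> \<gamma>) X" for Z
      proof -
        have tfZ: "tf Z = dp" using Z PF by simp
        have tpZ: "tp (\<gamma> Z) = dp" using T1[of Z] tfZ tpge[of "\<gamma> Z"] by simp
        have zD: "\<gamma> Z \<in> D"
        proof (rule ccontr)
          assume "\<gamma> Z \<notin> D"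
          then have "tp (\<gamma> Z) = \<infinity>" by (rule T3)
          then show False using tpZ dfin by simp
        qed
        have bb: "bregman (\<psi> \<circ> \<gamma>) Z X = bregman \<psi> (\<gamma> Z) x"
          using tfZ tpZ zD by (simp add: tf_def tp_def eindicator_def)
        have "\<psi> (\<gamma> Z) \<noteq> \<infinity>"
        proof
          assume "\<psi> (\<gamma> Z) = \<infinity>"
          then have "tp (\<gamma> Z) = \<infinity>" using zD by (simp add: tp_def bp eindicator_def)
          then show False using tpZ dfin by simp
        qed
        then obtain pz where pz: "\<psi> (\<gamma> Z) = ereal pz" using psi_nm[of "\<gamma> Z"] by (cases "\<psi> (\<gamma> Z)") auto
        have "- px - inner (Z - X) G = - px - inner (\<gamma> Z - x) g"
          using bb unfolding bf bp pz by simp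
        then have "inner Z G = inner (\<gamma> Z) (\<gamma> G)" using XG' gG' by (simp add: inner_diff_left)
        then obtain c where c: "c \<in> A" "Z = \<Lambda> c (\<gamma> Z)" "G = \<Lambda> c (\<gamma> G)"
          using common_dec by blast
        have "\<Lambda> c (Vpsi (\<gamma> X)) = Vf X" using c(3) gG' by (simp add: G_def g_def x_def)
        then have "\<Lambda> c (\<gamma> X) = X" by (rule inj_lemma[OF xU c(1)])
        then have e1: "X = \<Lambda> c (\<gamma> X)" by (rule sym)
        have gz: "\<gamma> Z \<in> bproj D \<psi> (\<gamma> X)" using PP tpZ by simp
        show ?thesis using gz c(1) e1 c(2) by blast
      qed
      have bwd: "Z \<in> bproj (\<gamma> -` D) (\<psi> \<circ> \<gamma>) X"
        if z: "z \<in> bproj D \<psi> (\<gamma> X)" and a: "a \<in> A" "X = \<Lambda> a (\<gamma> X)" and Zz: "Z = \<Lambda> a z" for Z z a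
      proof -
        have tpz: "tp z = dp" using z PP by simp
        have zD: "z \<in> D"
        proof (rule ccontr)
          assume "z \<notin> D"
          then have "tp z = \<infinity>" by (rule T3)
          then show False using tpz dfin by simp
        qed
        have "tf (\<Lambda> a z) = tp z" using T2[OF a(1) a(2)[folded x_def] zD] .
        then show ?thesis using tpz PF Zz by simp
      qed
      have c2: "\<forall>Z. Z \<in> bproj (\<gamma> -` D) (\<psi> \<circ> \<gamma>) X \<longleftrightarrow>
           (\<gamma> Z \<in> bproj D \<psi> (\<gamma> X) \<and> (\<exists>a\<in>A. X = \<Lambda> a (\<gamma> X) \<and> Z = \<Lambda> a (\<gamma> Z)))"
      proof (intro allI iffI)
        fix Z assume "Z \<in> bproj (\<gamma> -` D) (\<psi> \<circ> \<gamma>) X"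
        then show "\<gamma> Z \<in> bproj D \<psi> (\<gamma> X) \<and> (\<exists>a\<in>A. X = \<Lambda> a (\<gamma> X) \<and> Z = \<Lambda> a (\<gamma> Z))"
          by (rule fwd)
      next
        fix Z assume H: "\<gamma> Z \<in> bproj D \<psi> (\<gamma> X) \<and> (\<exists>a\<in>A. X = \<Lambda> a (\<gamma> X) \<and> Z = \<Lambda> a (\<gamma> Z))"
        then obtain a where "a \<in> A" "X = \<Lambda> a (\<gamma> X)" "Z = \<Lambda> a (\<gamma> Z)" by blast
        then show "Z \<in> bproj (\<gamma> -` D) (\<psi> \<circ> \<gamma>) X" using bwd H by blast
      qed
      have c3: "bproj (\<gamma> -` D) (\<psi> \<circ> \<gamma>) X =
           {\<Lambda> a z | z a. z \<in> bproj D \<psi> (\<gamma> X) \<and> a \<in> adapted_indices \<gamma> A \<Lambda> X}"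
      proof
        show "bproj (\<gamma> -` D) (\<psi> \<circ> \<gamma>) X \<subseteq> {\<Lambda> a z | z a. z \<in> bproj D \<psi> (\<gamma> X) \<and> a \<in> adapted_indices \<gamma> A \<Lambda> X}"
        proof
          fix Z assume "Z \<in> bproj (\<gamma> -` D) (\<psi> \<circ> \<gamma>) X"
          then obtain c where "\<gamma> Z \<in> bproj D \<psi> (\<gamma> X)" "c \<in> A" "X = \<Lambda> c (\<gamma> X)" "Z = \<Lambda> c (\<gamma> Z)"
            using fwd by blast
          then have cc: "\<gamma> Z \<in> bproj D \<psi> (\<gamma> X)" "c \<in> A" "X = \<Lambda> c (\<gamma> X)" "Z = \<Lambda> c (\<gamma> Z)" .
          have "c \<in> adapted_indices \<gamma> A \<Lambda> X" unfolding adapted_indices_def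
            by (rule CollectI) (rule conjI[OF cc(2) cc(3)])
          then have "Z = \<Lambda> c (\<gamma> Z) \<and> \<gamma> Z \<in> bproj D \<psi> (\<gamma> X) \<and> c \<in> adapted_indices \<gamma> A \<Lambda> X"
            using cc by blast
          then show "Z \<in> {\<Lambda> a z | z a. z \<in> bproj D \<psi> (\<gamma> X) \<and> a \<in> adapted_indices \<gamma> A \<Lambda> X}"
            by blast
        qed
        show "{\<Lambda> a z | z a. z \<in> bproj D \<psi> (\<gamma> X) \<and> a \<in> adapted_indices \<gamma> A \<Lambda> X} \<subseteq> bproj (\<gamma> -` D) (\<psi> \<circ> \<gamma>) X"
        proof
          fix W assume "W \<in> {\<Lambda> a z | z a. z \<in> bproj D \<psi> (\<gamma> X) \<and> a \<in> adapted_indices \<gamma> A \<Lambda> X}"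
          then obtain z a where za: "W = \<Lambda> a z" "z \<in> bproj D \<psi> (\<gamma> X)" "a \<in> A" "X = \<Lambda> a (\<gamma> X)"
            unfolding adapted_indices_def by blast
          show "W \<in> bproj (\<gamma> -` D) (\<psi> \<circ> \<gamma>) X" by (rule bwd[OF za(2) za(3) za(4) za(1)])
        qed
      qed
      have c4: "is_singleton (bproj (\<gamma> -` D) (\<psi> \<circ> \<gamma>) X) \<longleftrightarrow> is_singleton (bproj D \<psi> (\<gamma> X))"
      proof
        assume "is_singleton (bproj (\<gamma> -` D) (\<psi> \<circ> \<gamma>) X)"
        then obtain Z0 where Z0: "bproj (\<gamma> -` D) (\<psi> \<circ> \<gamma>) X = {Z0}" by (auto simp: is_singleton_def)
        have gZ0: "\<gamma> Z0 \<in> bproj D \<psi> (\<gamma> X)" using fwd Z0 by blast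
        have a0': "X = \<Lambda> a0 (\<gamma> X)" by (rule a0x(2))
        have "z1 = \<gamma> Z0" if "z1 \<in> bproj D \<psi> (\<gamma> X)" for z1
        proof -
          have "\<Lambda> a0 z1 \<in> {Z0}" using bwd[OF that a0(1) a0'] Z0 by blast
          moreover have "\<Lambda> a0 (\<gamma> Z0) \<in> {Z0}" using bwd[OF gZ0 a0(1) a0'] Z0 by blast
          ultimately have "\<Lambda> a0 z1 = \<Lambda> a0 (\<gamma> Z0)" by simp
          then show ?thesis using L_inj[OF a0(1)] by blast
        qed
        then have "bproj D \<psi> (\<gamma> X) = {\<gamma> Z0}" using gZ0 by blast
        then show "is_singleton (bproj D \<psi> (\<gamma> X))" by (simp add: is_singleton_def)
      next
        assume "is_singleton (bproj D \<psi> (\<gamma> X))"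
        then obtain z where z: "bproj D \<psi> (\<gamma> X) = {z}" by (auto simp: is_singleton_def)
        have tpz: "tp z = dp" using z PP by auto
        have zD: "z \<in> D"
        proof (rule ccontr)
          assume "z \<notin> D"
          then have "tp z = \<infinity>" by (rule T3)
          then show False using tpz dfin by simp
        qed
        have a0': "X = \<Lambda> a0 (\<gamma> X)" by (rule a0x(2))
        have uniq: "y = z" if y: "y \<in> D" "\<psi> y = \<psi> z" "inner y (Vpsi (\<gamma> X)) \<ge> inner z (Vpsi (\<gamma> X))" for y
        proof -
          have "- px - inner (y - x) g \<le> - px - inner (z - x) g"
            using y(3) by (simp add: g_def x_def inner_diff_left)
          then have "bregman \<psi> y x \<le> bregman \<psi> z x" unfolding bp y(2) by (intro add_left_mono) simp
          then have "tp y \<le> tp z" using y(1) zD by (simp add: tp_def eindicator_def)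
          then have "tp y = dp" using tpz tpge[of y] by simp
          then have "y \<in> bproj D \<psi> (\<gamma> X)" using PP by simp
          then show ?thesis using z by simp
        qed
        have "bproj (\<gamma> -` D) (\<psi> \<circ> \<gamma>) X = {\<Lambda> a0 z}"
        proof
          have "z \<in> bproj D \<psi> (\<gamma> X)" using z by simp
          then have "\<Lambda> a0 z \<in> bproj (\<gamma> -` D) (\<psi> \<circ> \<gamma>) X" by (rule bwd[OF _ a0(1) a0' refl])
          then show "{\<Lambda> a0 z} \<subseteq> bproj (\<gamma> -` D) (\<psi> \<circ> \<gamma>) X" by simp
          show "bproj (\<gamma> -` D) (\<psi> \<circ> \<gamma>) X \<subseteq> {\<Lambda> a0 z}"
          proof
            fix Z assume "Z \<in> bproj (\<gamma> -` D) (\<psi> \<circ> \<gamma>) X"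
            then obtain c where c: "\<gamma> Z \<in> bproj D \<psi> (\<gamma> X)" "c \<in> A" "X = \<Lambda> c (\<gamma> X)" "Z = \<Lambda> c (\<gamma> Z)"
              using fwd by blast
            have gz: "\<gamma> Z = z" using c(1) z by simp
            have "Z = \<Lambda> c (\<gamma> Z)" by (rule c(4))
            then have "Z = \<Lambda> c z" unfolding gz .
            also have "\<dots> = \<Lambda> a0 z" using sing_lemma[OF xU c(2,3) a0(1) a0' zD uniq] by simp
            finally show "Z \<in> {\<Lambda> a0 z}" by simp
          qed
        qed
        then show "is_singleton (bproj (\<gamma> -` D) (\<psi> \<circ> \<gamma>) X)" by (simp add: is_singleton_def)
      qed
      show ?thesis using bdf bdp deq c2 c3 c4 by simp
    qed
  qed
qed

end

theorem corollary6p4: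
  fixes S :: "('x::euclidean_space \<Rightarrow> 'x) set"
    and \<gamma> :: "'h::euclidean_space \<Rightarrow> 'x"
    and A :: "'a set"
    and \<Lambda> :: "'a \<Rightarrow> 'x \<Rightarrow> 'h"
    and D :: "'x set"
    and \<psi> :: "'x \<Rightarrow> ereal"
    and X :: 'h
  assumes sds: "spectral_decomposition_system S \<gamma> A \<Lambda>"
    and D_ne: "D \<noteq> {}"
    and D_inv: "invariant_set S D"
    and psi_G0: "Gamma0 \<psi>"
    and psi_inv: "invariant_fun S \<psi>"
    and psi_leg: "legendre \<psi>"
    and D_dom: "D \<inter> edom \<psi> \<noteq> {}"
  shows "bdist (\<gamma> -` D) (\<psi> \<circ> \<gamma>) X = bdist D \<psi> (\<gamma> X)
    \<and> (\<forall>Z. Z \<in> bproj (\<gamma> -` D) (\<psi> \<circ> \<gamma>) X \<longleftrightarrow>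
           (\<gamma> Z \<in> bproj D \<psi> (\<gamma> X) \<and> (\<exists>a\<in>A. X = \<Lambda> a (\<gamma> X) \<and> Z = \<Lambda> a (\<gamma> Z))))
    \<and> (bproj (\<gamma> -` D) (\<psi> \<circ> \<gamma>) X =
           {\<Lambda> a z | z a. z \<in> bproj D \<psi> (\<gamma> X) \<and> a \<in> adapted_indices \<gamma> A \<Lambda> X})
    \<and> (is_singleton (bproj (\<gamma> -` D) (\<psi> \<circ> \<gamma>) X) \<longleftrightarrow> is_singleton (bproj D \<psi> (\<gamma> X)))"
proof -
  obtain \<tau> where tau: "invariant_fun S \<tau>" "\<forall>x. \<tau> x \<in> orbit S x" "\<forall>a\<in>A. \<gamma> \<circ> \<Lambda> a = \<tau>"
    using sds unfolding spectral_decomposition_system_def by blast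
  interpret sds_setting S \<gamma> A \<Lambda> \<tau> D \<psi>
  proof
    show "isometry_group S" using sds unfolding spectral_decomposition_system_def by blast
    show "\<And>a. a \<in> A \<Longrightarrow> lin_isometry (\<Lambda> a)" using sds unfolding spectral_decomposition_system_def by blast
    show "invariant_fun S \<tau>" by (rule tau(1))
    show "\<And>x. \<tau> x \<in> orbit S x" using tau(2) by blast
    show "\<And>a. a \<in> A \<Longrightarrow> \<gamma> \<circ> \<Lambda> a = \<tau>" using tau(3) by blast
    show "\<And>X. \<exists>a\<in>A. X = \<Lambda> a (\<gamma> X)" using sds unfolding spectral_decomposition_system_def by blast
    show "\<And>X Y. inner X Y \<le> inner (\<gamma> X) (\<gamma> Y)" using sds unfolding spectral_decomposition_system_def by blast
    show "invariant_set S D" by (rule D_inv)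
    show "Gamma0 \<psi>" by (rule psi_G0)
    show "invariant_fun S \<psi>" by (rule psi_inv)
    show "legendre \<psi>" by (rule psi_leg)
  qed
  show ?thesis by (rule main_local)
qed

end
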